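(* Let $H$ be a complex Hilbert space and $\mathcal{I}$ an instrument on $H$ with outcome space $(\Omega_\mathcal{I},\mathcal{F}_\mathcal{I})$. For $a,b\in\mathcal{E}(H)$ let $\mathcal{I}_a^*\circ\mathcal{I}_b^*$ be the sub-observable $\Delta\mapsto\mathcal{I}_{a\circ b}^*(\Delta)$, where $a\circ b=a^{1/2}ba^{1/2}$. Then for $a,b,c\in\mathcal{E}(H)$: (1) if $b\perp c$, then $\mathcal{I}_a^*\circ(\mathcal{I}_b^*+\mathcal{I}_c^* )=\mathcal{I}_a^*\circ\mathcal{I}_b^*+\mathcal{I}_a^*\circ\mathcal{I}_c^*$; (2) if $0\le\lambda_i\le1$, $\sum_{i=1}^n\lambda_i=1$, then for any $b_1,\dots,b_n\in\mathcal{E}(H)$, $\mathcal{I}_a^*\circ\big(\sum_{i=1}^n\lambda_i\mathcal{I}_{b_i}^*\big)=\sum_{i=1}^n\lambda_i\,\mathcal{I}_a^*\circ\mathcal{I}_{b_i}^*$; (3) $\mathcal{I}_I^*\circ\mathcal{I}_a^*=\mathcal{I}_a^*\circ\mathcal{I}_I^*=\mathcal{I}_a^*$; (4) if $a\circ b=0$, then $\mathcal{I}_a^*\circ\mathcal{I}_b^*=\mathcal{I}_b^*\circ\mathcal{I}_a^*$; (5) if $ab=ba$, then $\mathcal{I}_a^*\circ(\mathcal{I}_b^*\circ\mathcal{I}_c^* )=(\mathcal{I}_a^*\circ\mathcal{I}_b^* )\circ\mathcal{I}_c^*$; (6) if $ac=ca$ and $bc=cb$, then $\mathcal{I}_c^*\circ(\mathcal{I}_a^*\circ\mathcal{I}_b^*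 )=(\mathcal{I}_a^*\circ\mathcal{I}_b^* )\circ\mathcal{I}_c^*$, and $\mathcal{I}_c^*\circ(\mathcal{I}_a^*+\mathcal{I}_b^* )=(\mathcal{I}_a^*+\mathcal{I}_b^* )\circ\mathcal{I}_c^*$ when $a\perp b$; (7) $\mathcal{I}_a^*\circ\mathcal{I}_b^*\le\mathcal{I}_a^*$; (8) if $a\le b$, then $\mathcal{I}_c^*\circ\mathcal{I}_a^*\le\mathcal{I}_c^*\circ\mathcal{I}_b^*$.
   Context: $\mathcal{E}(H)$ is the set of effects ($0\le a\le I$); $a\perp b$ means $a+b\le I$. States are effects of trace one. An instrument with outcome space $(\Omega_\mathcal{I},\mathcal{F}_\mathcal{I})$ is a countably additive map $\Delta\mapsto\mathcal{I}(\Delta)$ into completely positive linear maps with $\mathrm{tr}[\mathcal{I}(\Delta)(\rho)]\le1$ for states, $\mathcal{I}(\Omega_\mathcal{I})$ trace preserving on states. The dual $\mathcal{I}^*(\Delta)$ is the linear map defined by $\mathrm{tr}[\rho\,\mathcal{I}^*(\Delta)(B)]=\mathrm{tr}[\mathcal{I}(\Delta)(\rho)B]$ for all states $\rho$ and bounded $B$, and $\mathcal{I}_a^*(\Delta)=\mathcal{I}^*(\Delta)(a)$; each $\mathcal{I}_a^*$ is a sub-observable (countably additive effect-valued measure). Sums and scalar multiples of sub-observables are pointwise; by linearity of $\mathcal{I}^*(\Delta)$, $\mathcal{I}_b^*+\mathcal{I}_c^*=\mathcal{I}_{b+c}^*$ for $b\perp c$ and $\sum\lambda_i\mathcal{I}_{b_i}^*=\mathcal{I}_{\sum\lambda_ib_i}^*$,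 and the sequential product of such sub-observables is interpreted via these representations (e.g. $\mathcal{I}_a^*\circ(\mathcal{I}_b^*+\mathcal{I}_c^* )=\mathcal{I}_{a\circ(b+c)}^*$). For sub-observables with the same outcome space, $A\le B$ means $A(\Delta)\le B(\Delta)$ for every $\Delta$. *)

theory Defs
  imports "HOL-Analysis.Analysis"
begin

class chilbert_space = real_normed_vector + complete_space +
  fixes scaleC :: "complex \<Rightarrow> 'a \<Rightarrow> 'a" (infixr \<open>*\<^sub>C\<close> 75)
    and cinner :: "'a \<Rightarrow> 'a \<Rightarrow> complex"
  assumes scaleC_add_right: "c *\<^sub>C (x + y) = c *\<^sub>C x + c *\<^sub>C y"
    and scaleC_add_left: "(c + d) *\<^sub>C x = c *\<^sub>C x + d *\<^sub>C x"
    and scaleC_scaleC: "c *\<^sub>C (d *\<^sub>C x) = (c * d) *\<^sub>C x"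
    and scaleC_one: "1 *\<^sub>C x = x"
    and scaleR_scaleC: "scaleR r x = complex_of_real r *\<^sub>C x"
    and cinner_cnj: "cinner y x = cnj (cinner x y)"
    and cinner_add_right: "cinner x (y + z) = cinner x y + cinner x z"
    and cinner_scaleC_right: "cinner x (c *\<^sub>C y) = c * cinner x y"
    and cinner_self_nonneg: "0 \<le> Re (cinner x x)"
    and cinner_self_eq_0: "cinner x x = 0 \<longleftrightarrow> x = 0"
    and norm_cinner: "norm x = sqrt (Re (cinner x x))"

definition op_add :: "('h::chilbert_space \<Rightarrow> 'h) \<Rightarrow> ('h \<Rightarrow> 'h) \<Rightarrow> 'h \<Rightarrow> 'h" where
  "op_add S T = (\<lambda>x. S x + T x)"

definition op_minus :: "('h::chilbert_space \<Rightarrow> 'h) \<Rightarrow> ('h \<Rightarrow> 'h) \<Rightarrow> 'h \<Rightarrow> 'h" where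
  "op_minus S T = (\<lambda>x. S x - T x)"

definition op_scale :: "complex \<Rightarrow> ('h::chilbert_space \<Rightarrow> 'h) \<Rightarrow> 'h \<Rightarrow> 'h" where
  "op_scale c T = (\<lambda>x. c *\<^sub>C T x)"

definition op_zero :: "'h::chilbert_space \<Rightarrow> 'h" where
  "op_zero = (\<lambda>x. 0)"

definition bounded_op :: "('h::chilbert_space \<Rightarrow> 'h) \<Rightarrow> bool" where
  "bounded_op T \<longleftrightarrow> (\<forall>x y. T (x + y) = T x + T y) \<and> (\<forall>c x. T (c *\<^sub>C x) = c *\<^sub>C T x)
     \<and> (\<exists>K. \<forall>x. norm (T x) \<le> K * norm x)"

definition positive_op :: "('h::chilbert_space \<Rightarrow> 'h) \<Rightarrow> bool" where
  "positive_op T \<longleftrightarrow> bounded_op T \<and> (\<forall>x. Im (cinner x (T x)) = 0 \<and> 0 \<le> Re (cinner x (T x)))"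

definition op_le :: "('h::chilbert_space \<Rightarrow> 'h) \<Rightarrow> ('h \<Rightarrow> 'h) \<Rightarrow> bool" where
  "op_le A B \<longleftrightarrow> positive_op (op_minus B A)"

definition effect :: "('h::chilbert_space \<Rightarrow> 'h) \<Rightarrow> bool" where
  "effect a \<longleftrightarrow> op_le op_zero a \<and> op_le a id"

definition eff_orth :: "('h::chilbert_space \<Rightarrow> 'h) \<Rightarrow> ('h \<Rightarrow> 'h) \<Rightarrow> bool" where
  "eff_orth a b \<longleftrightarrow> op_le (op_add a b) id"

definition op_sqrt :: "('h::chilbert_space \<Rightarrow> 'h) \<Rightarrow> 'h \<Rightarrow> 'h" where
  "op_sqrt a = (THE s. positive_op s \<and> s \<circ> s = a)"

definition seqp :: "('h::chilbert_space \<Rightarrow> 'h) \<Rightarrow> ('h \<Rightarrow> 'h) \<Rightarrow> 'h \<Rightarrow> 'h" where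
  "seqp a b = op_sqrt a \<circ> b \<circ> op_sqrt a"

definition adjoint_op :: "('h::chilbert_space \<Rightarrow> 'h) \<Rightarrow> 'h \<Rightarrow> 'h" where
  "adjoint_op T = (THE S. \<forall>x y. cinner (S x) y = cinner x (T y))"

definition abs_op :: "('h::chilbert_space \<Rightarrow> 'h) \<Rightarrow> 'h \<Rightarrow> 'h" where
  "abs_op T = op_sqrt (adjoint_op T \<circ> T)"

definition is_onb :: "'h::chilbert_space set \<Rightarrow> bool" where
  "is_onb B \<longleftrightarrow> (\<forall>e\<in>B. cinner e e = 1) \<and> (\<forall>e\<in>B. \<forall>f\<in>B. e \<noteq> f \<longrightarrow> cinner e f = 0)
     \<and> (\<forall>x. (\<forall>e\<in>B. cinner e x = 0) \<longrightarrow> x = 0)"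

definition some_onb :: "'h::chilbert_space set" where
  "some_onb = (SOME B. is_onb B)"

text \<open>Trace tr T = \<Sum>_e \<langle>e, T e\<rangle> over an orthonormal basis (basis independent on trace class).\<close>
definition trace :: "('h::chilbert_space \<Rightarrow> 'h) \<Rightarrow> complex" where
  "trace T = infsum (\<lambda>e. cinner e (T e)) some_onb"

definition trace_class :: "('h::chilbert_space \<Rightarrow> 'h) \<Rightarrow> bool" where
  "trace_class T \<longleftrightarrow> bounded_op T \<and> (\<lambda>e. cinner e (abs_op T e)) summable_on some_onb"

definition trace_norm :: "('h::chilbert_space \<Rightarrow> 'h) \<Rightarrow> real" where
  "trace_norm T = Re (trace (abs_op T))"

definition state :: "('h::chilbert_space \<Rightarrow> 'h) \<Rightarrow> bool" where
  "state \<rho> \<longleftrightarrow> effect \<rho> \<and> trace \<rho> = 1"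

text \<open>Positivity of an n \<times> n block operator matrix acting on H^n.\<close>
definition block_positive :: "nat \<Rightarrow> (nat \<Rightarrow> nat \<Rightarrow> 'h::chilbert_space \<Rightarrow> 'h) \<Rightarrow> bool" where
  "block_positive n T \<longleftrightarrow> (\<forall>x::nat \<Rightarrow> 'h.
     Im (\<Sum>i<n. \<Sum>j<n. cinner (x i) (T i j (x j))) = 0 \<and>
     0 \<le> Re (\<Sum>i<n. \<Sum>j<n. cinner (x i) (T i j (x j))))"

definition completely_positive :: "(('h::chilbert_space \<Rightarrow> 'h) \<Rightarrow> ('h \<Rightarrow> 'h)) \<Rightarrow> bool" where
  "completely_positive \<Phi> \<longleftrightarrow> (\<forall>n T. (\<forall>i<n. \<forall>j<n. trace_class (T i j)) \<longrightarrow> block_positive n T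
      \<longrightarrow> block_positive n (\<lambda>i j. \<Phi> (T i j)))"

definition instrument :: "'d measure \<Rightarrow> ('d set \<Rightarrow> ('h::chilbert_space \<Rightarrow> 'h) \<Rightarrow> ('h \<Rightarrow> 'h)) \<Rightarrow> bool" where
  "instrument M \<I> \<longleftrightarrow>
     (\<forall>\<Delta>\<in>sets M.
        (\<forall>S T. trace_class S \<longrightarrow> trace_class T \<longrightarrow> \<I> \<Delta> (op_add S T) = op_add (\<I> \<Delta> S) (\<I> \<Delta> T)) \<and>
        (\<forall>c T. trace_class T \<longrightarrow> \<I> \<Delta> (op_scale c T) = op_scale c (\<I> \<Delta> T)) \<and>
        (\<forall>T. trace_class T \<longrightarrow> trace_class (\<I> \<Delta> T)) \<and>
        completely_positive (\<I> \<Delta>) \<and>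
        (\<forall>\<rho>. state \<rho> \<longrightarrow> Re (trace (\<I> \<Delta> \<rho>)) \<le> 1)) \<and>
     (\<forall>\<rho>. state \<rho> \<longrightarrow> trace (\<I> (space M) \<rho>) = 1) \<and>
     (\<forall>A::nat \<Rightarrow> 'd set. range A \<subseteq> sets M \<longrightarrow> disjoint_family A \<longrightarrow>
        (\<forall>T. trace_class T \<longrightarrow>
          (\<lambda>N. trace_norm (op_minus (\<I> (\<Union>n. A n) T) (\<lambda>x. \<Sum>n<N. \<I> (A n) T x))) \<longlonglongrightarrow> 0))"

definition dual_instrument :: "'d measure \<Rightarrow> ('d set \<Rightarrow> ('h::chilbert_space \<Rightarrow> 'h) \<Rightarrow> ('h \<Rightarrow> 'h))
    \<Rightarrow> ('d set \<Rightarrow> ('h \<Rightarrow> 'h) \<Rightarrow> ('h \<Rightarrow> 'h)) \<Rightarrow> bool" where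
  "dual_instrument M \<I> \<I>s \<longleftrightarrow> (\<forall>\<Delta>\<in>sets M. \<forall>B. bounded_op B \<longrightarrow>
     bounded_op (\<I>s \<Delta> B) \<and> (\<forall>\<rho>. state \<rho> \<longrightarrow> trace (\<rho> \<circ> \<I>s \<Delta> B) = trace (\<I> \<Delta> \<rho> \<circ> B)))"

definition sub_obs :: "('d set \<Rightarrow> ('h::chilbert_space \<Rightarrow> 'h) \<Rightarrow> ('h \<Rightarrow> 'h)) \<Rightarrow> ('h \<Rightarrow> 'h) \<Rightarrow> 'd set \<Rightarrow> 'h \<Rightarrow> 'h" where
  "sub_obs \<I>s a = (\<lambda>\<Delta>. \<I>s \<Delta> a)"

definition sub_add :: "('d set \<Rightarrow> 'h::chilbert_space \<Rightarrow> 'h) \<Rightarrow> ('d set \<Rightarrow> 'h \<Rightarrow> 'h) \<Rightarrow> 'd set \<Rightarrow> 'h \<Rightarrow> 'h" where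
  "sub_add A B = (\<lambda>\<Delta>. op_add (A \<Delta>) (B \<Delta>))"

definition sub_scale :: "real \<Rightarrow> ('d set \<Rightarrow> 'h::chilbert_space \<Rightarrow> 'h) \<Rightarrow> 'd set \<Rightarrow> 'h \<Rightarrow> 'h" where
  "sub_scale r A = (\<lambda>\<Delta>. op_scale (complex_of_real r) (A \<Delta>))"

definition sub_eq :: "'d measure \<Rightarrow> ('d set \<Rightarrow> 'h::chilbert_space \<Rightarrow> 'h) \<Rightarrow> ('d set \<Rightarrow> 'h \<Rightarrow> 'h) \<Rightarrow> bool" where
  "sub_eq M A B \<longleftrightarrow> (\<forall>\<Delta>\<in>sets M. A \<Delta> = B \<Delta>)"

definition sub_le :: "'d measure \<Rightarrow> ('d set \<Rightarrow> 'h::chilbert_space \<Rightarrow> 'h) \<Rightarrow> ('d set \<Rightarrow> 'h \<Rightarrow> 'h) \<Rightarrow> bool" where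
  "sub_le M A B \<longleftrightarrow> (\<forall>\<Delta>\<in>sets M. op_le (A \<Delta>) (B \<Delta>))"

end

theory Submission
  imports Defs
begin



lemma scaleC_zero_left [simp]:
  fixes x y z :: "'a::chilbert_space"
  shows "0 *\<^sub>C x = 0"
proof -
  have "0 *\<^sub>C x = (0 + 0) *\<^sub>C x" by simp
  also have "\<dots> = 0 *\<^sub>C x + 0 *\<^sub>C x" by (rule scaleC_add_left)
  finally show ?thesis by simp
qed

lemma scaleC_zero_right [simp]:
  fixes x y z :: "'a::chilbert_space"
  shows "c *\<^sub>C 0 = 0"
proof -
  have "c *\<^sub>C 0 = c *\<^sub>C (0 + 0)" by simp
  also have "\<dots> = c *\<^sub>C 0 + c *\<^sub>C 0" by (rule scaleC_add_right)
  finally show ?thesis by simp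
qed

lemma scaleC_minus_right:
  fixes x y z :: "'a::chilbert_space"
  shows "c *\<^sub>C (- x) = - (c *\<^sub>C x)"
proof -
  have "c *\<^sub>C (- x) + c *\<^sub>C x = 0" by (simp flip: scaleC_add_right)
  thus ?thesis by (simp add: eq_neg_iff_add_eq_0)
qed

lemma scaleC_diff_right:
  fixes x y z :: "'a::chilbert_space"
  shows "c *\<^sub>C (x - y) = c *\<^sub>C x - c *\<^sub>C y"
  by (simp only: diff_conv_add_uminus scaleC_add_right scaleC_minus_right)

lemma scaleC_minus_left:
  fixes x y z :: "'a::chilbert_space"
  shows "(- c) *\<^sub>C x = - (c *\<^sub>C x)"
proof -
  have "(- c) *\<^sub>C x + c *\<^sub>C x = 0" by (simp flip: scaleC_add_left)
  thus ?thesis by (simp add: eq_neg_iff_add_eq_0)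
qed

lemma scaleC_diff_left:
  fixes x y z :: "'a::chilbert_space"
  shows "(c - d) *\<^sub>C x = c *\<^sub>C x - d *\<^sub>C x"
proof -
  have "(c - d) *\<^sub>C x = (c + - d) *\<^sub>C x" by simp
  also have "\<dots> = c *\<^sub>C x + (- d) *\<^sub>C x" by (rule scaleC_add_left)
  finally show ?thesis by (simp add: scaleC_minus_left)
qed

lemma scaleC_sum_right:
  fixes f :: "_ \<Rightarrow> 'a::chilbert_space"
  shows "c *\<^sub>C (\<Sum>i\<in>S. f i) = (\<Sum>i\<in>S. c *\<^sub>C f i)"
  by (induction S rule: infinite_finite_induct) (auto simp: scaleC_add_right)

lemma scaleC_minus1:
  fixes x y z :: "'a::chilbert_space"
  shows "(-1) *\<^sub>C x = - x"
  by (simp add: scaleC_minus_left scaleC_one)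

lemma cinner_add_left:
  fixes x y z :: "'a::chilbert_space"
  shows "cinner (x + y) z = cinner x z + cinner y z"
  by (metis cinner_cnj cinner_add_right complex_cnj_add)

lemma cinner_scaleC_left:
  fixes x y z :: "'a::chilbert_space"
  shows "cinner (c *\<^sub>C x) y = cnj c * cinner x y"
  by (metis cinner_cnj cinner_scaleC_right complex_cnj_mult)

lemma cinner_zero_right [simp]:
  fixes x y z :: "'a::chilbert_space"
  shows "cinner x 0 = 0"
  by (metis scaleC_zero_left cinner_scaleC_right mult_zero_left)

lemma cinner_zero_left [simp]:
  fixes x y z :: "'a::chilbert_space"
  shows "cinner 0 x = 0"
  by (metis cinner_cnj cinner_zero_right complex_cnj_zero)

lemma cinner_minus_right:
  fixes x y z :: "'a::chilbert_space"
  shows "cinner x (- y) = - cinner x y"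
proof -
  have "cinner x (- y) + cinner x y = 0" by (simp flip: cinner_add_right)
  thus ?thesis by (simp add: eq_neg_iff_add_eq_0)
qed

lemma cinner_minus_left:
  fixes x y z :: "'a::chilbert_space"
  shows "cinner (- x) y = - cinner x y"
  by (metis cinner_cnj cinner_minus_right complex_cnj_minus)

lemma cinner_diff_right:
  fixes x y z :: "'a::chilbert_space"
  shows "cinner x (y - z) = cinner x y - cinner x z"
  by (simp only: diff_conv_add_uminus cinner_add_right cinner_minus_right)

lemma cinner_diff_left:
  fixes x y z :: "'a::chilbert_space"
  shows "cinner (x - y) z = cinner x z - cinner y z"
  by (simp only: diff_conv_add_uminus cinner_add_left cinner_minus_left)

lemma cinner_sum_right:
  fixes f :: "_ \<Rightarrow> 'a::chilbert_space"
  shows "cinner x (\<Sum>i\<in>S. f i) = (\<Sum>i\<in>S. cinner x (f i))"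
  by (induction S rule: infinite_finite_induct) (auto simp: cinner_add_right)

lemma cinner_sum_left:
  fixes f :: "_ \<Rightarrow> 'a::chilbert_space"
  shows "cinner (\<Sum>i\<in>S. f i) x = (\<Sum>i\<in>S. cinner (f i) x)"
  by (induction S rule: infinite_finite_induct) (auto simp: cinner_add_left)

lemma cinner_self_real:
  fixes x y z :: "'a::chilbert_space"
  shows "cinner x x = complex_of_real ((norm x)\<^sup>2)"
proof -
  have h: "cinner x x = cnj (cinner x x)" by (rule cinner_cnj)
  have "Im (cinner x x) = 0" using arg_cong[OF h, of Im] by simp
  moreover have "Re (cinner x x) = (norm x)\<^sup>2"
    using norm_cinner[of x] cinner_self_nonneg[of x] by simp
  ultimately show ?thesis by (simp add: complex_eq_iff)
qed

lemma norm_scaleC: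
  fixes x y z :: "'a::chilbert_space"
  shows "norm (c *\<^sub>C x) = cmod c * norm x"
proof -
  have "(norm (c *\<^sub>C x))\<^sup>2 = (cmod c * norm x)\<^sup>2"
  proof -
    have "complex_of_real ((norm (c *\<^sub>C x))\<^sup>2) = cinner (c *\<^sub>C x) (c *\<^sub>C x)"
      by (simp add: cinner_self_real)
    also have "\<dots> = (cnj c * c) * cinner x x"
      by (simp add: cinner_scaleC_left cinner_scaleC_right)
    also have "\<dots> = complex_of_real ((cmod c)\<^sup>2) * complex_of_real ((norm x)\<^sup>2)"
      by (metis cinner_self_real complex_norm_square mult.commute)
    also have "\<dots> = complex_of_real ((cmod c * norm x)\<^sup>2)"
      by (simp add: power_mult_distrib)
    finally show ?thesis using of_real_eq_iff by blast
  qed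
  thus ?thesis by (simp add: power2_eq_iff_nonneg)
qed

lemma cinner_eq_zero_iff:
  fixes x y z :: "'a::chilbert_space"
  shows "cinner x x = 0 \<longleftrightarrow> x = 0"
  by (rule cinner_self_eq_0)

lemma scaleC_real:
  fixes x y z :: "'a::chilbert_space"
  shows "complex_of_real r *\<^sub>C x = r *\<^sub>R x"
  by (simp add: scaleR_scaleC)

lemma form_CS:
  fixes B :: "'a::chilbert_space \<Rightarrow> 'a \<Rightarrow> complex" and x y :: "'a"
  assumes add_r: "\<And>x y z. B x (y + z) = B x y + B x z"
    and sc_r: "\<And>x c y. B x (c *\<^sub>C y) = c * B x y"
    and herm: "\<And>x y. B y x = cnj (B x y)"
    and pos: "\<And>x. 0 \<le> Re (B x x)"
  shows "(cmod (B x y))\<^sup>2 \<le> Re (B x x) * Re (B y y)"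
proof -
  have add_l: "B (x + y) z = B x z + B y z" for x y z
    by (metis add_r herm complex_cnj_add)
  have sc_l: "B (c *\<^sub>C x) y = cnj c * B x y" for c x y
    by (metis sc_r herm complex_cnj_mult)
  have realB: "B z z = complex_of_real (Re (B z z))" for z
  proof -
    have h: "B z z = cnj (B z z)" by (rule herm)
    have "Im (B z z) = 0" using arg_cong[OF h, of Im] by simp
    thus ?thesis by (simp add: complex_eq_iff)
  qed
  define b where "b = B x y"
  define p where "p = Re (B x x)"
  define q where "q = Re (B y y)"
  have key: "0 \<le> p - 2 * t * (cmod b)\<^sup>2 + t\<^sup>2 * (cmod b)\<^sup>2 * q" for t :: real
  proof -
    define l where "l = - complex_of_real t * cnj b"
    define nb where "nb = (cmod b)\<^sup>2"
    have bb: "b * cnj b = complex_of_real nb"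
      unfolding nb_def by (rule complex_norm_square[symmetric])
    have e1: "l * b = complex_of_real (- t * nb)"
      by (simp add: l_def bb[symmetric] mult.commute mult.left_commute)
    have e2: "cnj l * cnj b = complex_of_real (- t * nb)"
      by (simp add: l_def bb[symmetric] mult.commute mult.left_commute)
    have e3: "cnj l * l = complex_of_real (t\<^sup>2 * nb)"
      by (simp add: l_def bb[symmetric] power2_eq_square mult.commute mult.left_commute)
    have "B (x + l *\<^sub>C y) (x + l *\<^sub>C y) = B x x + l * B x y + cnj l * B y x + cnj l * l * B y y"
      by (simp add: add_l add_r sc_l sc_r distrib_left distrib_right mult.assoc)
    also have "\<dots> = B x x + l * b + cnj l * cnj b + cnj l * l * B y y"
      by (simp add: b_def herm[of x y])
    also have "\<dots> = complex_of_real (p - 2 * t * nb + t\<^sup>2 * nb * q)"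
      using realB[of x] realB[of y] unfolding e1 e2 e3 p_def q_def
      by (simp add: algebra_simps)
    finally have "Re (B (x + l *\<^sub>C y) (x + l *\<^sub>C y)) = p - 2 * t * nb + t\<^sup>2 * nb * q"
      by simp
    thus ?thesis using pos[of "x + l *\<^sub>C y"] by (simp add: nb_def)
  qed
  show ?thesis
  proof (cases "q = 0")
    case True
    have "(cmod b)\<^sup>2 = 0"
    proof (rule ccontr)
      assume ne: "(cmod b)\<^sup>2 \<noteq> 0"
      hence gt: "(cmod b)\<^sup>2 > 0" by simp
      have "0 \<le> p - 2 * ((p + 1) / (cmod b)\<^sup>2) * (cmod b)\<^sup>2"
        using key[of "(p+1) / (cmod b)\<^sup>2"] True by simp
      also have "\<dots> = p - 2 * (p + 1)" using ne by simp
      finally show False using pos[of x] p_def by simp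
    qed
    thus ?thesis using True by (simp add: b_def q_def)
  next
    case False
    hence qpos: "q > 0" using pos[of y] q_def by simp
    have "0 \<le> p - 2 * (1/q) * (cmod b)\<^sup>2 + (1/q)\<^sup>2 * (cmod b)\<^sup>2 * q"
      by (rule key)
    also have "\<dots> = p - (cmod b)\<^sup>2 / q"
      using qpos by (simp add: power2_eq_square field_simps)
    finally have "(cmod b)\<^sup>2 / q \<le> p" by simp
    hence "(cmod b)\<^sup>2 \<le> p * q" using qpos by (simp add: divide_le_eq)
    thus ?thesis by (simp add: b_def p_def q_def)
  qed
qed

lemma cinner_CS:
  fixes x y :: "'a::chilbert_space"
  shows "cmod (cinner x y) \<le> norm x * norm y"
proof -
  have "(cmod (cinner x y))\<^sup>2 \<le> Re (cinner x x) * Re (cinner y y)"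
    by (rule form_CS; (rule cinner_add_right | rule cinner_scaleC_right | rule cinner_cnj | rule cinner_self_nonneg))
  also have "\<dots> = (norm x * norm y)\<^sup>2"
    by (simp add: cinner_self_real power_mult_distrib)
  finally show ?thesis by (rule power2_le_imp_le) simp
qed


lemma bop_add: "bounded_op T \<Longrightarrow> T (x + y) = T x + T y"
  by (simp add: bounded_op_def)

lemma bop_scaleC: "bounded_op T \<Longrightarrow> T (c *\<^sub>C x) = c *\<^sub>C T x"
  by (simp add: bounded_op_def)

lemma bop_zero: "bounded_op T \<Longrightarrow> T 0 = 0"
  by (metis bop_scaleC scaleC_zero_left)

lemma bop_minus: "bounded_op T \<Longrightarrow> T (- x) = - T x"
  by (metis bop_scaleC scaleC_minus1)

lemma bop_diff: "bounded_op T \<Longrightarrow> T (x - y) = T x - T y"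
  by (simp only: diff_conv_add_uminus bop_add bop_minus)

lemma bop_sum: "bounded_op T \<Longrightarrow> T (\<Sum>i\<in>S. f i) = (\<Sum>i\<in>S. T (f i))"
  by (induction S rule: infinite_finite_induct) (auto simp: bop_add bop_zero)

lemma bop_bound: "bounded_op T \<Longrightarrow> \<exists>K\<ge>0. \<forall>x. norm (T x) \<le> K * norm x"
proof -
  assume "bounded_op T"
  then obtain K where K: "\<And>x. norm (T x) \<le> K * norm x" by (auto simp: bounded_op_def)
  have "norm (T x) \<le> max K 0 * norm x" for x
    using K[of x] by (metis max.cobounded1 mult_right_mono norm_ge_zero order_trans)
  thus ?thesis by (intro exI[of _ "max K 0"]) auto
qed

lemma bop_bounded_linear: "bounded_op T \<Longrightarrow> bounded_linear T"
proof -
  assume T: "bounded_op T"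
  then obtain K where K: "\<And>x. norm (T x) \<le> K * norm x" by (auto simp: bounded_op_def)
  show ?thesis
  proof (rule bounded_linear_intro[of _ K])
    show "T (x + y) = T x + T y" for x y using T by (rule bop_add)
    show "T (r *\<^sub>R x) = r *\<^sub>R T x" for r x
      using T by (simp add: scaleR_scaleC bop_scaleC)
    show "norm (T x) \<le> norm x * K" for x using K[of x] by (simp add: mult.commute)
  qed
qed

lemma bop_comp: "bounded_op S \<Longrightarrow> bounded_op T \<Longrightarrow> bounded_op (S \<circ> T)"
proof -
  assume S: "bounded_op S" and T: "bounded_op T"
  obtain K where K: "K \<ge> 0" "\<And>x. norm (S x) \<le> K * norm x" using bop_bound[OF S] by auto
  obtain L where L: "L \<ge> 0" "\<And>x. norm (T x) \<le> L * norm x" using bop_bound[OF T] by auto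
  have "norm (S (T x)) \<le> (K * L) * norm x" for x
  proof -
    have "norm (S (T x)) \<le> K * norm (T x)" by (rule K(2))
    also have "\<dots> \<le> K * (L * norm x)" by (rule mult_left_mono[OF L(2) K(1)])
    finally show ?thesis by (simp add: mult.assoc)
  qed
  thus ?thesis unfolding bounded_op_def using S T
    by (auto simp: bop_add bop_scaleC intro!: exI[of _ "K * L"])
qed

lemma bop_id: "bounded_op (id :: 'h::chilbert_space \<Rightarrow> 'h)"
  unfolding bounded_op_def by (auto intro: exI[of _ 1])

lemma bop_op_zero: "bounded_op (op_zero :: 'h::chilbert_space \<Rightarrow> 'h)"
  unfolding bounded_op_def op_zero_def by (auto intro: exI[of _ 0])

lemma bop_op_add: "bounded_op S \<Longrightarrow> bounded_op T \<Longrightarrow> bounded_op (op_add S T)"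
proof -
  assume S: "bounded_op S" and T: "bounded_op T"
  obtain K where K: "K \<ge> 0" "\<And>x. norm (S x) \<le> K * norm x" using bop_bound[OF S] by auto
  obtain L where L: "L \<ge> 0" "\<And>x. norm (T x) \<le> L * norm x" using bop_bound[OF T] by auto
  have "norm (S x + T x) \<le> (K + L) * norm x" for x
    using norm_triangle_ineq[of "S x" "T x"] K(2)[of x] L(2)[of x] by (simp add: algebra_simps)
  thus ?thesis unfolding op_add_def bounded_op_def using S T
    by (auto simp: bop_add bop_scaleC scaleC_add_right intro!: exI[of _ "K + L"])
qed

lemma bop_op_minus: "bounded_op S \<Longrightarrow> bounded_op T \<Longrightarrow> bounded_op (op_minus S T)"
proof -
  assume S: "bounded_op S" and T: "bounded_op T"
  obtain K where K: "K \<ge> 0" "\<And>x. norm (S x) \<le> K * norm x" using bop_bound[OF S] by auto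
  obtain L where L: "L \<ge> 0" "\<And>x. norm (T x) \<le> L * norm x" using bop_bound[OF T] by auto
  have "norm (S x - T x) \<le> (K + L) * norm x" for x
    using norm_triangle_ineq4[of "S x" "T x"] K(2)[of x] L(2)[of x] by (simp add: algebra_simps)
  moreover have "S (x + y) - T (x + y) = S x - T x + (S y - T y)" for x y
    using S T by (simp add: bop_add)
  moreover have "S (c *\<^sub>C x) - T (c *\<^sub>C x) = c *\<^sub>C (S x - T x)" for c x
    using S T by (simp add: bop_scaleC scaleC_diff_right)
  ultimately show ?thesis unfolding op_minus_def bounded_op_def
    by (auto intro!: exI[of _ "K + L"])
qed

lemma bop_op_scale: "bounded_op T \<Longrightarrow> bounded_op (op_scale c T)"
proof -
  assume T: "bounded_op T"
  obtain L where L: "L \<ge> 0" "\<And>x. norm (T x) \<le> L * norm x" using bop_bound[OF T] by auto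
  have "norm (c *\<^sub>C T x) \<le> (cmod c * L) * norm x" for x
    using L(2)[of x] by (simp add: norm_scaleC mult.assoc mult_left_mono)
  moreover have "c *\<^sub>C T (d *\<^sub>C x) = d *\<^sub>C (c *\<^sub>C T x)" for d x
    using T by (simp add: bop_scaleC scaleC_scaleC mult.commute)
  ultimately show ?thesis unfolding op_scale_def bounded_op_def using T
    by (auto simp: scaleC_add_right bop_add intro!: exI[of _ "cmod c * L"])
qed

lemma op_add_apply: "op_add S T x = S x + T x" by (simp add: op_add_def)
lemma op_minus_apply: "op_minus S T x = S x - T x" by (simp add: op_minus_def)
lemma op_scale_apply: "op_scale c T x = c *\<^sub>C T x" by (simp add: op_scale_def)
lemma op_zero_apply: "op_zero x = 0" by (simp add: op_zero_def)

lemma bop_sum_ops: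
  assumes "\<And>i. i \<in> S \<Longrightarrow> bounded_op (T i)"
  shows "bounded_op (\<lambda>x. \<Sum>i\<in>S. T i x)"
  using assms
proof (induction S rule: infinite_finite_induct)
  case (infinite S) thus ?case using bop_op_zero by (simp add: op_zero_def)
next
  case empty thus ?case using bop_op_zero by (simp add: op_zero_def)
next
  case (insert i S)
  have "bounded_op (op_add (T i) (\<lambda>x. \<Sum>i\<in>S. T i x))"
    using insert by (intro bop_op_add) auto
  thus ?case using insert by (simp add: op_add_def)
qed

definition sym_op :: "('h::chilbert_space \<Rightarrow> 'h) \<Rightarrow> bool" where
  "sym_op T \<longleftrightarrow> (\<forall>x y. cinner (T x) y = cinner x (T y))"

lemma polar_expand:
  fixes X :: "'h::chilbert_space \<Rightarrow> 'h"
  assumes X: "bounded_op X"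
  shows "cinner (x + y) (X (x + y)) = cinner x (X x) + cinner y (X y) + cinner x (X y) + cinner y (X x)"
    and "cinner (x + \<i> *\<^sub>C y) (X (x + \<i> *\<^sub>C y)) =
           cinner x (X x) + cinner y (X y) + \<i> * cinner x (X y) - \<i> * cinner y (X x)"
proof -
  show "cinner (x + y) (X (x + y)) = cinner x (X x) + cinner y (X y) + cinner x (X y) + cinner y (X x)"
    using X by (simp add: bop_add cinner_add_left cinner_add_right)
  have e: "X (x + \<i> *\<^sub>C y) = X x + \<i> *\<^sub>C X y"
    using X by (simp add: bop_add bop_scaleC)
  have "cinner (x + \<i> *\<^sub>C y) (X (x + \<i> *\<^sub>C y)) =
     cinner x (X x) + \<i> * cinner x (X y) + (cnj \<i> * cinner y (X x) + cnj \<i> * (\<i> * cinner y (X y)))"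
    unfolding e by (simp only: cinner_add_left cinner_add_right cinner_scaleC_left cinner_scaleC_right)
      (simp add: algebra_simps)
  thus "cinner (x + \<i> *\<^sub>C y) (X (x + \<i> *\<^sub>C y)) =
           cinner x (X x) + cinner y (X y) + \<i> * cinner x (X y) - \<i> * cinner y (X x)"
    by (simp add: algebra_simps)
qed

lemma quad_zero_imp_zero:
  fixes X :: "'h::chilbert_space \<Rightarrow> 'h"
  assumes X: "bounded_op X" and q: "\<And>v. cinner v (X v) = 0"
  shows "X y = 0"
proof -
  have "cinner x (X y) = 0" for x
  proof -
    have 1: "cinner x (X y) + cinner y (X x) = 0"
      using polar_expand(1)[OF X, of x y] q by simp
    have 2: "\<i> * cinner x (X y) - \<i> * cinner y (X x) = 0"
      using polar_expand(2)[OF X, of x y] q by simp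
    have "\<i> * (cinner x (X y) + cinner y (X x)) + (\<i> * cinner x (X y) - \<i> * cinner y (X x)) = 0"
      using 1 2 by simp
    hence "2 * \<i> * cinner x (X y) = 0" by (simp add: algebra_simps)
    thus ?thesis by simp
  qed
  from this[of "X y"] show ?thesis by (simp add: cinner_eq_zero_iff)
qed

lemma quad_eq_imp_eq:
  fixes X Y :: "'h::chilbert_space \<Rightarrow> 'h"
  assumes X: "bounded_op X" and Y: "bounded_op Y" and q: "\<And>v. cinner v (X v) = cinner v (Y v)"
  shows "X = Y"
proof
  fix y
  have D: "bounded_op (op_minus X Y)" by (rule bop_op_minus[OF X Y])
  have "op_minus X Y y = 0"
    by (rule quad_zero_imp_zero[OF D]) (simp add: op_minus_apply cinner_diff_right q)
  thus "X y = Y y" by (simp add: op_minus_apply)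
qed

lemma positive_opD:
  assumes "positive_op T"
  shows "bounded_op T" "Im (cinner x (T x)) = 0" "0 \<le> Re (cinner x (T x))"
  using assms by (auto simp: positive_op_def)

lemma positive_quad_real:
  assumes "positive_op T"
  shows "cinner x (T x) = complex_of_real (Re (cinner x (T x)))"
  using positive_opD[OF assms] by (simp add: complex_eq_iff)

lemma positive_sym:
  fixes T :: "'h::chilbert_space \<Rightarrow> 'h"
  assumes P: "positive_op T"
  shows "sym_op T"
  unfolding sym_op_def
proof (intro allI)
  fix x y :: 'h
  have X: "bounded_op T" using positive_opD[OF P] by simp
  define u where "u = cinner x (T y)"
  define w where "w = cinner y (T x)"
  have 1: "Im (u + w) = 0"
    using polar_expand(1)[OF X, of x y] positive_opD(2)[OF P, of "x + y"]
      positive_opD(2)[OF P, of x] positive_opD(2)[OF P, of y]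
    by (simp add: u_def w_def)
  have 2: "Im (\<i> * u - \<i> * w) = 0"
    using polar_expand(2)[OF X, of x y] positive_opD(2)[OF P, of "x + \<i> *\<^sub>C y"]
      positive_opD(2)[OF P, of x] positive_opD(2)[OF P, of y]
    by (simp add: u_def w_def)
  have "w = cnj u" using 1 2 by (simp add: complex_eq_iff)
  hence "cinner (T x) y = u"
    by (metis cinner_cnj complex_cnj_cnj w_def)
  thus "cinner (T x) y = cinner x (T y)" by (simp add: u_def)
qed

lemma sym_opD: "sym_op T \<Longrightarrow> cinner (T x) y = cinner x (T y)"
  by (simp add: sym_op_def)

lemma pos_form_CS:
  fixes T :: "'h::chilbert_space \<Rightarrow> 'h"
  assumes P: "positive_op T"
  shows "(cmod (cinner x (T y)))\<^sup>2 \<le> Re (cinner x (T x)) * Re (cinner y (T y))"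
proof -
  have X: "bounded_op T" using positive_opD[OF P] by simp
  have S: "sym_op T" by (rule positive_sym[OF P])
  show ?thesis
  proof (rule form_CS[where B = "\<lambda>x y. cinner x (T y)"])
    show "cinner x (T (y + z)) = cinner x (T y) + cinner x (T z)" for x y z
      using X by (simp add: bop_add cinner_add_right)
    show "cinner x (T (c *\<^sub>C y)) = c * cinner x (T y)" for x c y
      using X by (simp add: bop_scaleC cinner_scaleC_right)
    show "cinner y (T x) = cnj (cinner x (T y))" for x y
      using sym_opD[OF S, of y x] cinner_cnj[of x "T y"] by (metis cinner_cnj sym_opD[OF S])
    show "0 \<le> Re (cinner x (T x))" for x by (rule positive_opD(3)[OF P])
  qed
qed

lemma pos_quad_zero:
  fixes T :: "'h::chilbert_space \<Rightarrow> 'h"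
  assumes P: "positive_op T" and z: "Re (cinner y (T y)) = 0"
  shows "T y = 0"
proof -
  have "(cmod (cinner (T y) (T y)))\<^sup>2 \<le> 0"
    using pos_form_CS[OF P, of "T y" y] z by simp
  hence "cinner (T y) (T y) = 0" by simp
  thus ?thesis by (simp add: cinner_eq_zero_iff)
qed

lemma pos_contraction:
  fixes T :: "'h::chilbert_space \<Rightarrow> 'h"
  assumes P: "positive_op T" and le: "\<And>x. Re (cinner x (T x)) \<le> (norm x)\<^sup>2"
  shows "norm (T x) \<le> norm x"
proof -
  have "((norm (T x))\<^sup>2)\<^sup>2 = (cmod (cinner (T x) (T x)))\<^sup>2"
    by (simp only: cinner_self_real norm_of_real) simp
  also have "\<dots> \<le> Re (cinner (T x) (T (T x))) * Re (cinner x (T x))"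
    using pos_form_CS[OF P, of "T x" x] by simp
  also have "\<dots> \<le> (norm (T x))\<^sup>2 * (norm x)\<^sup>2"
    by (rule mult_mono[OF le le]) (auto intro: positive_opD(3)[OF P])
  finally have "((norm (T x))\<^sup>2)\<^sup>2 \<le> ((norm (T x)) * (norm x))\<^sup>2"
    by (simp add: power_mult_distrib)
  hence "(norm (T x))\<^sup>2 \<le> norm (T x) * norm x"
    by (rule power2_le_imp_le) simp
  thus ?thesis
    by (cases "norm (T x) = 0") (auto simp: power2_eq_square)
qed

lemma effect_iff: "effect a \<longleftrightarrow> positive_op a \<and> positive_op (\<lambda>x. x - a x)"
proof -
  have "op_minus a op_zero = a" by (simp add: op_minus_def op_zero_def)
  moreover have "op_minus id a = (\<lambda>x. x - a x)" by (simp add: op_minus_def)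
  ultimately show ?thesis by (simp add: effect_def op_le_def)
qed

lemma op_le_iff: "op_le A B \<longleftrightarrow> positive_op (\<lambda>x. B x - A x)"
  by (simp add: op_le_def op_minus_def)

lemma effect_quad_le:
  assumes "effect a"
  shows "Re (cinner x (a x)) \<le> (norm x)\<^sup>2"
proof -
  have "0 \<le> Re (cinner x (x - a x))"
    using assms by (auto simp: effect_iff positive_op_def)
  thus ?thesis by (simp add: cinner_diff_right cinner_self_real)
qed

lemma effect_contraction:
  assumes "effect a"
  shows "norm (a x) \<le> norm x"
  using pos_contraction[of a] assms effect_quad_le[OF assms] by (auto simp: effect_iff)


section \<open>Coefficients of 1 - sqrt(1 - t)\<close>

function cc :: "nat \<Rightarrow> real" where
  "cc n = (if n = 0 then 0 else if n = 1 then 1/2 else (\<Sum>k\<in>{1..<n}. cc k * cc (n - k)) / 2)"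
  by auto
termination by (relation "Wellfounded.measure id") auto

declare cc.simps [simp del]

lemma cc_0 [simp]: "cc 0 = 0" by (simp add: cc.simps)
lemma cc_1 [simp]: "cc 1 = 1/2" by (simp add: cc.simps)
lemma cc_Suc0 [simp]: "cc (Suc 0) = 1/2" by (simp add: cc.simps)
lemma cc_ge2: "n \<ge> 2 \<Longrightarrow> cc n = (\<Sum>k\<in>{1..<n}. cc k * cc (n - k)) / 2"
  by (subst cc.simps) auto

lemma cc_nonneg: "0 \<le> cc n"
proof (induction n rule: less_induct)
  case (less n)
  show ?case
  proof (cases "n \<ge> 2")
    case True
    have "0 \<le> (\<Sum>k\<in>{1..<n}. cc k * cc (n - k))"
      by (rule sum_nonneg) (use less in auto)
    thus ?thesis using cc_ge2[OF True] by simp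
  next
    case False
    hence "n = 0 \<or> n = 1" by auto
    thus ?thesis by auto
  qed
qed

lemma cc_conv: "(\<Sum>k\<le>n. cc k * cc (n - k)) = 2 * cc n - (if n = 1 then 1 else 0)"
proof (cases "n \<ge> 2")
  case True
  have "{..n} = insert 0 (insert n {1..<n})" by auto
  hence "(\<Sum>k\<le>n. cc k * cc (n - k)) = (\<Sum>k\<in>{1..<n}. cc k * cc (n - k))"
    using True by simp
  thus ?thesis using cc_ge2[OF True] True by simp
next
  case False
  hence "n = 0 \<or> n = 1" by auto
  thus ?thesis by (auto simp: atMost_Suc)
qed

definition SS :: "nat \<Rightarrow> real" where "SS N = (\<Sum>n<N. cc n)"

lemma SS_nonneg: "0 \<le> SS N"
  unfolding SS_def by (rule sum_nonneg) (simp add: cc_nonneg)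

lemma tri_sum: "(\<Sum>(i,j)\<in>{(i,j). i + j < N}. cc i * cc j) = 2 * SS N - (if N \<ge> 2 then 1 else 0)"
proof -
  have "(\<Sum>(i,j)\<in>{(i,j). i + j < N}. cc i * cc j) = (\<Sum>n<N. \<Sum>i\<le>n. cc i * cc (n - i))"
    by (rule sum.triangle_reindex)
  also have "\<dots> = (\<Sum>n<N. 2 * cc n - (if n = 1 then 1 else 0))"
    by (simp add: cc_conv)
  also have "\<dots> = 2 * SS N - (\<Sum>n<N. (if n = 1 then 1 else 0))"
    by (simp add: sum_subtractf SS_def sum_distrib_left)
  also have "(\<Sum>n<N. (if n = 1 then 1 else 0) :: real) = (if N \<ge> 2 then 1 else 0)"
    by (simp add: sum.delta' )
  finally show ?thesis .
qed

lemma prod_sum: "(\<Sum>(i,j)\<in>{..<M} \<times> {..<M}. cc i * cc j) = (SS M)\<^sup>2"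
  by (simp add: SS_def power2_eq_square sum_product sum.cartesian_product)

lemma tri_finite: "finite {(i, j). i + j < (N::nat)}"
proof -
  have "{(i, j). i + j < N} \<subseteq> {..<N} \<times> {..<N}" by auto
  thus ?thesis by (rule finite_subset) auto
qed

lemma tri_le: "(\<Sum>(i,j)\<in>{(i,j). i + j < N}. cc i * cc j) \<le> (SS (N - 1))\<^sup>2"
proof -
  let ?A = "{(i,j). i + j < N}" and ?B = "{..<N-1} \<times> {..<N-1}"
  let ?f = "\<lambda>(i,j). cc i * cc j"
  have "sum ?f ?A = sum ?f (?A \<inter> ?B)"
  proof (rule sum.mono_neutral_right)
    show "finite ?A" by (rule tri_finite)
    show "?A \<inter> ?B \<subseteq> ?A" by auto
    show "\<forall>p\<in>?A - ?A \<inter> ?B. ?f p = 0"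
    proof
      fix p assume p: "p \<in> ?A - ?A \<inter> ?B"
      obtain i j where ij: "p = (i, j)" by force
      from p ij have "i = 0 \<or> j = 0" by auto
      thus "?f p = 0" using ij by auto
    qed
  qed
  also have "\<dots> \<le> sum ?f ?B"
    by (rule sum_mono2) (auto simp: cc_nonneg)
  also have "\<dots> = (SS (N - 1))\<^sup>2" by (rule prod_sum)
  finally show ?thesis .
qed

lemma tri_ge: "(SS M)\<^sup>2 \<le> (\<Sum>(i,j)\<in>{(i,j). i + j < 2 * M}. cc i * cc j)"
proof -
  have "(SS M)\<^sup>2 = (\<Sum>(i,j)\<in>{..<M} \<times> {..<M}. cc i * cc j)" by (rule prod_sum[symmetric])
  also have "\<dots> \<le> (\<Sum>(i,j)\<in>{(i,j). i + j < 2 * M}. cc i * cc j)"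
    by (rule sum_mono2) (auto simp: tri_finite cc_nonneg)
  finally show ?thesis .
qed

lemma SS_le_1: "SS N \<le> 1"
proof (induction N)
  case 0 thus ?case by (simp add: SS_def)
next
  case (Suc N)
  have "2 * SS (Suc N) - (if Suc N \<ge> 2 then 1 else 0) \<le> (SS N)\<^sup>2"
    using tri_le[of "Suc N"] tri_sum[of "Suc N"] by simp
  moreover have "(SS N)\<^sup>2 \<le> 1" using Suc SS_nonneg[of N]
    by (simp add: power_le_one)
  ultimately show ?case by (auto split: if_splits)
qed

lemma cc_summable: "summable cc"
  by (rule summableI_nonneg_bounded[where x = 1]) (auto simp: cc_nonneg SS_le_1[unfolded SS_def])

lemma SS_lim: "SS \<longlonglongrightarrow> suminf cc"
  unfolding SS_def using summable_LIMSEQ[OF cc_summable] .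

lemma cc_suminf: "suminf cc = 1"
proof -
  define L where "L = suminf cc"
  have L1: "L \<le> 1" unfolding L_def
    by (rule suminf_le_const[OF cc_summable]) (simp add: SS_le_1[unfolded SS_def])
  have lim1: "(\<lambda>M. (SS M)\<^sup>2) \<longlonglongrightarrow> L\<^sup>2"
    using SS_lim unfolding L_def by (intro tendsto_intros)
  have "(\<lambda>M. SS (2 * M)) \<longlonglongrightarrow> L"
  proof -
    have "strict_mono (\<lambda>M::nat. 2 * M)" by (auto simp: strict_mono_def)
    from LIMSEQ_subseq_LIMSEQ[OF SS_lim this] show ?thesis by (simp add: L_def o_def)
  qed
  hence lim2: "(\<lambda>M. 2 * SS (2 * M) - 1) \<longlonglongrightarrow> 2 * L - 1"
    by (intro tendsto_intros)
  have ev: "eventually (\<lambda>M. (SS M)\<^sup>2 \<le> 2 * SS (2 * M) - 1) sequentially"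
  proof (rule eventually_sequentiallyI[of 1])
    fix M :: nat assume "1 \<le> M"
    thus "(SS M)\<^sup>2 \<le> 2 * SS (2 * M) - 1" using tri_ge[of M] tri_sum[of "2 * M"] by simp
  qed
  have "L\<^sup>2 \<le> 2 * L - 1" by (rule tendsto_le[OF _ lim2 lim1 ev]) simp
  hence "(L - 1)\<^sup>2 \<le> 0" by (simp add: power2_eq_square algebra_simps)
  hence "L = 1" by simp
  thus ?thesis by (simp add: L_def)
qed

lemma SS_lim1: "SS \<longlonglongrightarrow> 1"
  using SS_lim cc_suminf by simp

lemma defect_lim: "(\<lambda>N. (SS N)\<^sup>2 - (2 * SS N - (if N \<ge> 2 then 1 else 0))) \<longlonglongrightarrow> 0"
proof -
  have "(\<lambda>N. (SS N)\<^sup>2 - (2 * SS N - 1)) \<longlonglongrightarrow> 1\<^sup>2 - (2 * 1 - 1)"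
    using SS_lim1 by (intro tendsto_intros)
  hence "(\<lambda>N. (SS N)\<^sup>2 - (2 * SS N - 1)) \<longlonglongrightarrow> 0" by simp
  moreover have "eventually (\<lambda>N. (SS N)\<^sup>2 - (2 * SS N - 1) =
      (SS N)\<^sup>2 - (2 * SS N - (if N \<ge> 2 then 1 else 0))) sequentially"
    by (rule eventually_sequentiallyI[of 2]) simp
  ultimately show ?thesis by (rule Lim_transform_eventually)
qed


section \<open>Square roots of effects\<close>

subclass (in chilbert_space) banach ..

lemma bop_scaleR: "bounded_op T \<Longrightarrow> T (r *\<^sub>R x) = r *\<^sub>R T x"
  by (simp add: scaleR_scaleC bop_scaleC)

lemma cinner_scaleR_right: "cinner x (r *\<^sub>R y) = complex_of_real r * cinner x y"
  by (simp add: scaleR_scaleC cinner_scaleC_right)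

lemma cinner_scaleR_left: "cinner (r *\<^sub>R x) y = complex_of_real r * cinner x y"
  by (simp add: scaleR_scaleC cinner_scaleC_left)

lemma bop_funpow: "bounded_op Y \<Longrightarrow> bounded_op (Y ^^ n)"
  by (induction n) (auto simp: bop_id bop_comp)

lemma funpow_contraction:
  fixes Y :: "'a::real_normed_vector \<Rightarrow> 'a"
  assumes "\<And>x. norm (Y x) \<le> norm x"
  shows "norm ((Y ^^ n) x) \<le> norm x"
proof (induction n)
  case 0 show ?case by simp
next
  case (Suc n)
  have "norm (Y ((Y ^^ n) x)) \<le> norm ((Y ^^ n) x)" by (rule assms)
  with Suc show ?case by simp
qed

lemma sym_funpow: "sym_op Y \<Longrightarrow> sym_op (Y ^^ n)"
  by (induction n) (auto simp: sym_op_def funpow_swap1)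

lemma comm_funpow: "(\<And>x. D (Y x) = Y (D x)) \<Longrightarrow> D ((Y ^^ n) x) = (Y ^^ n) (D x)"
  by (induction n) auto

lemma funpow_add_apply: "(Y ^^ i) ((Y ^^ j) x) = (Y ^^ (i + j)) x"
  by (simp add: funpow_add)

lemma bounded_linear_cinner_right: "bounded_linear (\<lambda>y. cinner (x::'h::chilbert_space) y)"
proof (rule bounded_linear_intro[of _ "norm x"])
  show "cinner x (y + z) = cinner x y + cinner x z" for y z by (rule cinner_add_right)
  show "cinner x (r *\<^sub>R y) = r *\<^sub>R cinner x y" for r y
    by (simp add: cinner_scaleR_right scaleR_conv_of_real)
  show "norm (cinner x y) \<le> norm y * norm x" for y
    using cinner_CS[of x y] by (simp add: mult.commute)
qed

locale eff_sq =
  fixes Y :: "'h::chilbert_space \<Rightarrow> 'h"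
  assumes Yeff: "effect Y"
begin

lemma Ybop: "bounded_op Y" using Yeff by (auto simp: effect_iff positive_op_def)
lemma Ypos: "positive_op Y" using Yeff by (auto simp: effect_iff)
lemma Ysym: "sym_op Y" by (rule positive_sym[OF Ypos])
lemma Ycontr: "norm ((Y ^^ n) x) \<le> norm x"
  by (rule funpow_contraction) (rule effect_contraction[OF Yeff])
lemma Ynbop: "bounded_op (Y ^^ n)" by (rule bop_funpow[OF Ybop])

definition GG :: "'h \<Rightarrow> 'h" where "GG x = (\<Sum>n. cc n *\<^sub>R (Y ^^ n) x)"
definition PP :: "nat \<Rightarrow> 'h \<Rightarrow> 'h" where "PP N x = (\<Sum>n<N. cc n *\<^sub>R (Y ^^ n) x)"

lemma term_bound: "norm (cc n *\<^sub>R (Y ^^ n) x) \<le> cc n * norm x"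
  by (simp add: abs_of_nonneg[OF cc_nonneg] mult_left_mono[OF Ycontr cc_nonneg])

lemma norm_summable: "summable (\<lambda>n. norm (cc n *\<^sub>R (Y ^^ n) x))"
proof (rule summable_comparison_test'[where g = "\<lambda>n. cc n * norm x" and N = 0])
  show "summable (\<lambda>n. cc n * norm x)" by (rule summable_mult2[OF cc_summable])
  show "norm (norm (cc n *\<^sub>R (Y ^^ n) x)) \<le> cc n * norm x" for n using term_bound[of n x] by simp
qed

lemma G_summable: "summable (\<lambda>n. cc n *\<^sub>R (Y ^^ n) x)"
  by (rule summable_norm_cancel[OF norm_summable[of x]])

lemma PP_lim: "(\<lambda>N. PP N x) \<longlonglongrightarrow> GG x"
  unfolding PP_def GG_def by (rule summable_LIMSEQ[OF G_summable])

lemma GG_norm: "norm (GG x) \<le> norm x"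
proof -
  have "norm (GG x) \<le> (\<Sum>n. norm (cc n *\<^sub>R (Y ^^ n) x))"
    unfolding GG_def by (rule summable_norm[OF norm_summable[of x]])
  also have "\<dots> \<le> (\<Sum>n. cc n * norm x)"
    by (rule suminf_le[OF term_bound norm_summable[of x]]) (intro summable_mult2 cc_summable)
  also have "\<dots> = norm x" using suminf_mult2[OF cc_summable, of "norm x"] cc_suminf by simp
  finally show ?thesis .
qed

lemma PP_norm: "norm (PP N x) \<le> norm x"
proof -
  have "norm (PP N x) \<le> (\<Sum>n<N. norm (cc n *\<^sub>R (Y ^^ n) x))"
    unfolding PP_def by (rule norm_sum)
  also have "\<dots> \<le> (\<Sum>n<N. cc n * norm x)" by (rule sum_mono) (rule term_bound)
  also have "\<dots> = SS N * norm x" by (simp add: SS_def sum_distrib_right)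
  also have "\<dots> \<le> norm x" using SS_le_1[of N] SS_nonneg[of N] by (simp add: mult_left_le_one_le)
  finally show ?thesis .
qed

lemma bop_PP: "bounded_op (PP N)"
proof -
  have "bounded_op (\<lambda>x. \<Sum>n\<in>{..<N}. op_scale (complex_of_real (cc n)) (Y ^^ n) x)"
    by (rule bop_sum_ops) (intro bop_op_scale Ynbop)
  moreover have "PP N = (\<lambda>x. \<Sum>n<N. cc n *\<^sub>R (Y ^^ n) x)" by (rule ext) (simp add: PP_def)
  ultimately show ?thesis by (simp add: op_scale_def scaleR_scaleC[symmetric])
qed

lemma GG_add: "GG (x + y) = GG x + GG y"
proof -
  have "GG x + GG y = (\<Sum>n. cc n *\<^sub>R (Y ^^ n) x + cc n *\<^sub>R (Y ^^ n) y)"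
    unfolding GG_def by (rule suminf_add[OF G_summable G_summable])
  also have "\<dots> = GG (x + y)" unfolding GG_def
    by (simp add: bop_add[OF Ynbop] scaleR_add_right)
  finally show ?thesis by simp
qed

lemma GG_scaleC: "GG (c *\<^sub>C x) = c *\<^sub>C GG x"
proof -
  have bl: "bounded_linear (\<lambda>v::'h. c *\<^sub>C v)"
    using bop_bounded_linear[OF bop_op_scale[OF bop_id, of c]] by (simp add: op_scale_def)
  have "c *\<^sub>C GG x = (\<Sum>n. c *\<^sub>C (cc n *\<^sub>R (Y ^^ n) x))"
    unfolding GG_def by (rule bounded_linear.suminf[OF bl G_summable])
  also have "\<dots> = GG (c *\<^sub>C x)" unfolding GG_def
    by (simp add: bop_scaleC[OF Ynbop] scaleR_scaleC scaleC_scaleC mult.commute)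
  finally show ?thesis by simp
qed

lemma bop_GG: "bounded_op GG"
  unfolding bounded_op_def using GG_add GG_scaleC GG_norm by (auto intro!: exI[of _ 1])

lemma GG_comm:
  assumes D: "bounded_op D" and comm: "\<And>x. D (Y x) = Y (D x)"
  shows "D (GG x) = GG (D x)"
proof -
  have "D (GG x) = (\<Sum>n. D (cc n *\<^sub>R (Y ^^ n) x))"
    unfolding GG_def by (rule bounded_linear.suminf[OF bop_bounded_linear[OF D] G_summable])
  also have "\<dots> = GG (D x)" unfolding GG_def
    by (simp add: bop_scaleR[OF D] comm_funpow[of D Y, OF comm])
  finally show ?thesis .
qed

lemma quad_GG: "cinner x (GG x) = (\<Sum>n. complex_of_real (cc n) * cinner x ((Y ^^ n) x))"
proof -
  have "cinner x (GG x) = (\<Sum>n. cinner x (cc n *\<^sub>R (Y ^^ n) x))"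
    unfolding GG_def by (rule bounded_linear.suminf[OF bounded_linear_cinner_right G_summable])
  thus ?thesis by (simp add: cinner_scaleR_right)
qed

lemma quad_Yn_real: "Im (cinner x ((Y ^^ n) x)) = 0"
proof -
  have "cinner x ((Y ^^ n) x) = cnj (cinner x ((Y ^^ n) x))"
    using sym_opD[OF sym_funpow[OF Ysym, of n], of x x] cinner_cnj[of "(Y ^^ n) x" x] by simp
  from arg_cong[OF this, of Im] show ?thesis by simp
qed

lemma PP_PP: "PP N (PP N x) = (\<Sum>(i,j)\<in>{..<N}\<times>{..<N}. (cc i * cc j) *\<^sub>R (Y ^^ (i + j)) x)"
proof -
  have "PP N (PP N x) = (\<Sum>i<N. cc i *\<^sub>R (Y ^^ i) (\<Sum>j<N. cc j *\<^sub>R (Y ^^ j) x))"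
    by (simp add: PP_def)
  also have "\<dots> = (\<Sum>i<N. \<Sum>j<N. (cc i * cc j) *\<^sub>R (Y ^^ (i + j)) x)"
    by (simp add: bop_sum[OF Ynbop] bop_scaleR[OF Ynbop] funpow_add_apply scaleR_sum_right)
  also have "\<dots> = (\<Sum>(i,j)\<in>{..<N}\<times>{..<N}. (cc i * cc j) *\<^sub>R (Y ^^ (i + j)) x)"
    by (rule sum.cartesian_product)
  finally show ?thesis .
qed

lemma tri_vec: "(\<Sum>(i,j)\<in>{(i,j). i + j < N}. (cc i * cc j) *\<^sub>R (Y ^^ (i + j)) x)
   = 2 *\<^sub>R PP N x - (if N \<ge> 2 then Y x else 0)"
proof -
  have "(\<Sum>(i,j)\<in>{(i,j). i + j < N}. (cc i * cc j) *\<^sub>R (Y ^^ (i + j)) x)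
      = (\<Sum>n<N. \<Sum>i\<le>n. (cc i * cc (n - i)) *\<^sub>R (Y ^^ (i + (n - i))) x)"
    by (rule sum.triangle_reindex)
  also have "\<dots> = (\<Sum>n<N. \<Sum>i\<le>n. (cc i * cc (n - i)) *\<^sub>R (Y ^^ n) x)"
    by (intro sum.cong refl) auto
  also have "\<dots> = (\<Sum>n<N. (\<Sum>i\<le>n. cc i * cc (n - i)) *\<^sub>R (Y ^^ n) x)"
    by (simp add: scaleR_sum_left)
  also have "\<dots> = (\<Sum>n<N. (2 * cc n) *\<^sub>R (Y ^^ n) x - (if n = 1 then Y x else 0))"
    by (intro sum.cong refl) (simp add: cc_conv scaleR_diff_left)
  also have "\<dots> = 2 *\<^sub>R PP N x - (\<Sum>n<N. (if n = 1 then Y x else 0))"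
    by (simp add: sum_subtractf PP_def scaleR_sum_right)
  also have "(\<Sum>n<N. (if n = 1 then Y x else 0)) = (if N \<ge> 2 then Y x else 0)"
    by (simp add: sum.delta')
  finally show ?thesis .
qed

lemma diff_bound: "norm (PP N (PP N x) - (2 *\<^sub>R PP N x - (if N \<ge> 2 then Y x else 0)))
   \<le> norm x * ((SS N)\<^sup>2 - (2 * SS N - (if N \<ge> 2 then 1 else 0)))"
proof -
  define A where "A = {..<N} \<times> {..<N}"
  define T where "T = {(i,j). i + j < N}"
  define f where "f = (\<lambda>(i,j). (cc i * cc j) *\<^sub>R (Y ^^ (i + j)) x)"
  define g where "g = (\<lambda>(i,j). cc i * cc j)"
  have fin: "finite A" by (simp add: A_def)
  have sub: "T \<subseteq> A" by (auto simp: A_def T_def)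
  have "PP N (PP N x) - (2 *\<^sub>R PP N x - (if N \<ge> 2 then Y x else 0)) = sum f A - sum f T"
    using PP_PP[where N=N and x=x] tri_vec[where N=N and x=x] by (simp add: A_def T_def f_def)
  also have "\<dots> = sum f (A - T)" by (rule sum_diff[OF fin sub, symmetric])
  finally have eq: "PP N (PP N x) - (2 *\<^sub>R PP N x - (if N \<ge> 2 then Y x else 0)) = sum f (A - T)" .
  have "norm (sum f (A - T)) \<le> (\<Sum>p\<in>A - T. norm (f p))" by (rule norm_sum)
  also have "\<dots> \<le> (\<Sum>p\<in>A - T. g p * norm x)"
  proof (rule sum_mono)
    fix p assume "p \<in> A - T"
    obtain i j where p: "p = (i, j)" by force
    have "norm (f p) = (cc i * cc j) * norm ((Y ^^ (i + j)) x)"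
      by (simp add: f_def p abs_of_nonneg cc_nonneg)
    also have "\<dots> \<le> (cc i * cc j) * norm x"
      by (rule mult_left_mono[OF Ycontr]) (simp add: cc_nonneg)
    finally show "norm (f p) \<le> g p * norm x" by (simp add: g_def p)
  qed
  also have "\<dots> = norm x * (sum g A - sum g T)"
    by (simp add: sum_diff[OF fin sub] sum_distrib_left[symmetric] mult.commute right_diff_distrib)
  also have "sum g A = (SS N)\<^sup>2" unfolding g_def A_def by (rule prod_sum)
  also have "sum g T = 2 * SS N - (if N \<ge> 2 then 1 else 0)" unfolding g_def T_def by (rule tri_sum)
  finally show ?thesis using eq by simp
qed

lemma GG_GG: "GG (GG x) = 2 *\<^sub>R GG x - Y x"
proof -
  define a where "a = (\<lambda>N. PP N (PP N x))"
  define b where "b = (\<lambda>N. 2 *\<^sub>R PP N x - (if N \<ge> 2 then Y x else 0))"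
  have la: "a \<longlonglongrightarrow> GG (GG x)"
  proof -
    have l1: "(\<lambda>N. norm (PP N x - GG x)) \<longlonglongrightarrow> 0"
      using PP_lim[of x] by (simp add: LIM_zero tendsto_norm_zero)
    have l2: "(\<lambda>N. norm (PP N (GG x) - GG (GG x))) \<longlonglongrightarrow> 0"
      using PP_lim[of "GG x"] by (simp add: LIM_zero tendsto_norm_zero)
    have "(\<lambda>N. norm (PP N x - GG x) + norm (PP N (GG x) - GG (GG x))) \<longlonglongrightarrow> 0 + 0"
      by (intro tendsto_add l1 l2)
    hence l3: "(\<lambda>N. norm (PP N x - GG x) + norm (PP N (GG x) - GG (GG x))) \<longlonglongrightarrow> 0" by simp
    have "(\<lambda>N. a N - GG (GG x)) \<longlonglongrightarrow> 0"
    proof (rule Lim_null_comparison[OF _ l3])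
      show "\<forall>\<^sub>F N in sequentially. norm (a N - GG (GG x)) \<le> norm (PP N x - GG x) + norm (PP N (GG x) - GG (GG x))"
      proof (rule always_eventually, rule allI)
        fix N
        have "a N - GG (GG x) = PP N (PP N x - GG x) + (PP N (GG x) - GG (GG x))"
          by (simp add: a_def bop_diff[OF bop_PP])
        hence "norm (a N - GG (GG x)) \<le> norm (PP N (PP N x - GG x)) + norm (PP N (GG x) - GG (GG x))"
          by (metis norm_triangle_ineq)
        also have "\<dots> \<le> norm (PP N x - GG x) + norm (PP N (GG x) - GG (GG x))"
          using PP_norm[of N "PP N x - GG x"] by simp
        finally show "norm (a N - GG (GG x)) \<le> norm (PP N x - GG x) + norm (PP N (GG x) - GG (GG x))" .
      qed
    qed
    thus ?thesis by (simp add: LIM_zero_iff)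
  qed
  have lb: "b \<longlonglongrightarrow> 2 *\<^sub>R GG x - Y x"
  proof -
    have "(\<lambda>N. 2 *\<^sub>R PP N x - Y x) \<longlonglongrightarrow> 2 *\<^sub>R GG x - Y x"
      by (intro tendsto_intros PP_lim)
    moreover have "eventually (\<lambda>N. 2 *\<^sub>R PP N x - Y x = b N) sequentially"
      by (rule eventually_sequentiallyI[of 2]) (simp add: b_def)
    ultimately show ?thesis by (rule Lim_transform_eventually)
  qed
  have "(\<lambda>N. a N - b N) \<longlonglongrightarrow> 0"
  proof (rule Lim_null_comparison)
    show "\<forall>\<^sub>F N in sequentially. norm (a N - b N) \<le> norm x * ((SS N)\<^sup>2 - (2 * SS N - (if N \<ge> 2 then 1 else 0)))"
      using diff_bound by (simp add: a_def b_def)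
    have "(\<lambda>N. norm x * ((SS N)\<^sup>2 - (2 * SS N - (if N \<ge> 2 then 1 else 0)))) \<longlonglongrightarrow> norm x * 0"
      by (intro tendsto_mult tendsto_const defect_lim)
    thus "(\<lambda>N. norm x * ((SS N)\<^sup>2 - (2 * SS N - (if N \<ge> 2 then 1 else 0)))) \<longlonglongrightarrow> 0" by simp
  qed
  hence "(\<lambda>N. a N - b N + b N) \<longlonglongrightarrow> 0 + (2 *\<^sub>R GG x - Y x)"
    by (intro tendsto_add lb)
  hence "a \<longlonglongrightarrow> 2 *\<^sub>R GG x - Y x" by simp
  from LIMSEQ_unique[OF la this] show ?thesis .
qed

definition RR :: "'h \<Rightarrow> 'h" where "RR x = x - GG x"

lemma bop_RR: "bounded_op RR"
proof -
  have "bounded_op (op_minus id GG)" by (rule bop_op_minus[OF bop_id bop_GG])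
  moreover have "op_minus id GG = RR" by (rule ext) (simp add: op_minus_def RR_def)
  ultimately show ?thesis by simp
qed

lemma RR_RR: "RR (RR x) = x - Y x"
proof -
  have "RR (RR x) = x - GG x - (GG x - GG (GG x))"
    by (simp add: RR_def bop_diff[OF bop_GG])
  also have "\<dots> = x - Y x" by (simp add: GG_GG scaleR_2 algebra_simps)
  finally show ?thesis .
qed

lemma RR_comm:
  assumes D: "bounded_op D" and comm: "\<And>x. D (Y x) = Y (D x)"
  shows "D (RR x) = RR (D x)"
  by (simp add: RR_def bop_diff[OF D] GG_comm[OF D comm])

lemma quad_GG_sums: "(\<lambda>n. complex_of_real (cc n) * cinner x ((Y ^^ n) x)) sums cinner x (GG x)"
proof -
  have "(\<lambda>n. cinner x (cc n *\<^sub>R (Y ^^ n) x)) sums cinner x (GG x)"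
    unfolding GG_def by (rule bounded_linear.sums[OF bounded_linear_cinner_right summable_sums[OF G_summable]])
  thus ?thesis by (simp add: cinner_scaleR_right)
qed

lemma RR_pos: "positive_op RR"
proof -
  have "Im (cinner x (RR x)) = 0 \<and> 0 \<le> Re (cinner x (RR x))" for x
  proof -
    have s: "(\<lambda>n. complex_of_real (cc n) * cinner x ((Y ^^ n) x)) sums cinner x (GG x)"
      by (rule quad_GG_sums)
    have "(\<lambda>n. Im (complex_of_real (cc n) * cinner x ((Y ^^ n) x))) sums Im (cinner x (GG x))"
      by (rule bounded_linear.sums[OF bounded_linear_Im s])
    hence "(\<lambda>n. 0) sums Im (cinner x (GG x))" by (simp add: quad_Yn_real)
    hence imG: "Im (cinner x (GG x)) = 0" using sums_unique sums_zero by fastforce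
    have sr: "(\<lambda>n. cc n * Re (cinner x ((Y ^^ n) x))) sums Re (cinner x (GG x))"
      using bounded_linear.sums[OF bounded_linear_Re s] by simp
    have sb: "(\<lambda>n. cc n * (norm x)\<^sup>2) sums (1 * (norm x)\<^sup>2)"
      by (rule sums_mult2) (use summable_sums[OF cc_summable] cc_suminf in simp)
    have le: "cc n * Re (cinner x ((Y ^^ n) x)) \<le> cc n * (norm x)\<^sup>2" for n
    proof (rule mult_left_mono[OF _ cc_nonneg])
      have "Re (cinner x ((Y ^^ n) x)) \<le> cmod (cinner x ((Y ^^ n) x))" by (rule complex_Re_le_cmod)
      also have "\<dots> \<le> norm x * norm ((Y ^^ n) x)" by (rule cinner_CS)
      also have "\<dots> \<le> norm x * norm x" by (rule mult_left_mono[OF Ycontr norm_ge_zero])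
      finally show "Re (cinner x ((Y ^^ n) x)) \<le> (norm x)\<^sup>2" by (simp add: power2_eq_square)
    qed
    have reG: "Re (cinner x (GG x)) \<le> (norm x)\<^sup>2"
      using sums_le[OF le sr sb] by simp
    show ?thesis using imG reG
      by (simp add: RR_def cinner_diff_right cinner_self_real)
  qed
  thus ?thesis using bop_RR by (simp add: positive_op_def)
qed

end

lemma effect_sqrt_exists:
  fixes a :: "'h::chilbert_space \<Rightarrow> 'h"
  assumes a: "effect a"
  shows "\<exists>S. positive_op S \<and> (\<forall>x. S (S x) = a x) \<and>
     (\<forall>D. bounded_op D \<longrightarrow> (\<forall>x. D (a x) = a (D x)) \<longrightarrow> (\<forall>x. D (S x) = S (D x)))"
proof -
  define Y where "Y = (\<lambda>x. x - a x)"
  have "(\<lambda>x. x - Y x) = a" by (simp add: Y_def)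
  hence "effect Y" using a by (simp add: effect_iff Y_def)
  then interpret E: eff_sq Y by unfold_locales
  have bopa: "bounded_op a" using a by (simp add: effect_iff positive_op_def)
  show ?thesis
  proof (intro exI conjI allI impI)
    show "positive_op E.RR" by (rule E.RR_pos)
    show "E.RR (E.RR x) = a x" for x using E.RR_RR[of x] by (simp add: Y_def)
    show "D (E.RR x) = E.RR (D x)" if "bounded_op D" "\<forall>x. D (a x) = a (D x)" for D x
    proof (rule E.RR_comm[OF that(1)])
      show "D (Y x) = Y (D x)" for x using that by (simp add: Y_def bop_diff)
    qed
  qed
qed


lemma positive_scaleR:
  assumes P: "positive_op T" and r: "0 \<le> r"
  shows "positive_op (\<lambda>x. r *\<^sub>R T x)"
proof -
  have "bounded_op (op_scale (complex_of_real r) T)" by (rule bop_op_scale) (use P in \<open>simp add: positive_op_def\<close>)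
  hence b: "bounded_op (\<lambda>x. r *\<^sub>R T x)" by (simp add: op_scale_def scaleR_scaleC)
  show ?thesis unfolding positive_op_def
    using b positive_opD(2,3)[OF P] r by (simp add: cinner_scaleR_right)
qed

lemma positive_scaled_effect:
  fixes T :: "'h::chilbert_space \<Rightarrow> 'h"
  assumes P: "positive_op T"
  shows "\<exists>k>0. effect (\<lambda>x. (1 / k) *\<^sub>R T x)"
proof -
  have b: "bounded_op T" using P by (simp add: positive_op_def)
  obtain K where K: "K \<ge> 0" "\<And>x. norm (T x) \<le> K * norm x" using bop_bound[OF b] by auto
  define k where "k = K + 1"
  have k: "k > 0" using K by (simp add: k_def)
  have p1: "positive_op (\<lambda>x. (1 / k) *\<^sub>R T x)" by (rule positive_scaleR[OF P]) (use k in simp)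
  have "positive_op (op_minus id (\<lambda>x. (1 / k) *\<^sub>R T x))"
  proof -
    have bb: "bounded_op (op_minus id (\<lambda>x. (1 / k) *\<^sub>R T x))"
      by (rule bop_op_minus[OF bop_id]) (use p1 in \<open>simp add: positive_op_def\<close>)
    have "Im (cinner x (x - (1 / k) *\<^sub>R T x)) = 0 \<and> 0 \<le> Re (cinner x (x - (1 / k) *\<^sub>R T x))" for x
    proof -
      have "Re (cinner x (T x)) \<le> cmod (cinner x (T x))" by (rule complex_Re_le_cmod)
      also have "\<dots> \<le> norm x * norm (T x)" by (rule cinner_CS)
      also have "\<dots> \<le> norm x * (K * norm x)" by (rule mult_left_mono[OF K(2) norm_ge_zero])
      also have "\<dots> \<le> k * (norm x)\<^sup>2" using K by (simp add: k_def power2_eq_square algebra_simps)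
      finally have "Re (cinner x (T x)) / k \<le> (norm x)\<^sup>2" using k by (simp add: divide_le_eq mult.commute)
      thus ?thesis using positive_opD(2)[OF P, of x]
        by (simp add: cinner_diff_right cinner_scaleR_right cinner_self_real)
    qed
    thus ?thesis using bb by (simp add: positive_op_def op_minus_def)
  qed
  hence "effect (\<lambda>x. (1 / k) *\<^sub>R T x)"
    using p1 by (simp add: effect_iff op_minus_def)
  thus ?thesis using k by blast
qed

lemma positive_sqrt_exists:
  fixes T :: "'h::chilbert_space \<Rightarrow> 'h"
  assumes P: "positive_op T"
  shows "\<exists>S. positive_op S \<and> (\<forall>x. S (S x) = T x) \<and>
     (\<forall>D. bounded_op D \<longrightarrow> (\<forall>x. D (T x) = T (D x)) \<longrightarrow> (\<forall>x. D (S x) = S (D x)))"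
proof -
  have b: "bounded_op T" using P by (simp add: positive_op_def)
  obtain k where k: "k > 0" and e: "effect (\<lambda>x. (1 / k) *\<^sub>R T x)"
    using positive_scaled_effect[OF P] by auto
  obtain S1 where S1: "positive_op S1" "\<And>x. S1 (S1 x) = (1 / k) *\<^sub>R T x"
    and c1: "\<And>D. bounded_op D \<Longrightarrow> (\<forall>x. D ((1 / k) *\<^sub>R T x) = (1 / k) *\<^sub>R T (D x)) \<Longrightarrow> (\<forall>x. D (S1 x) = S1 (D x))"
    using effect_sqrt_exists[OF e] by blast
  have bS1: "bounded_op S1" using S1(1) by (simp add: positive_op_def)
  define S where "S = (\<lambda>x. sqrt k *\<^sub>R S1 x)"
  show ?thesis
  proof (intro exI conjI allI impI)
    show "positive_op S" unfolding S_def by (rule positive_scaleR[OF S1(1)]) (use k in simp)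
    show "S (S x) = T x" for x
      using k by (simp add: S_def bop_scaleR[OF bS1] S1(2))
    show "D (S x) = S (D x)" if D: "bounded_op D" and cm: "\<forall>x. D (T x) = T (D x)" for D x
    proof -
      have "\<forall>x. D ((1 / k) *\<^sub>R T x) = (1 / k) *\<^sub>R T (D x)" using cm by (simp add: bop_scaleR[OF D])
      from c1[OF D this] show ?thesis by (simp add: S_def bop_scaleR[OF D])
    qed
  qed
qed

lemma comm_pos_sq_unique:
  fixes s r :: "'h::chilbert_space \<Rightarrow> 'h"
  assumes ps: "positive_op s" and pr: "positive_op r"
    and cm: "\<And>x. s (r x) = r (s x)" and sq: "\<And>x. s (s x) = r (r x)"
  shows "s = r"
proof
  fix x
  have bs: "bounded_op s" and br: "bounded_op r" using ps pr by (auto simp: positive_op_def)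
  define y where "y = s x - r x"
  have "s y + r y = 0" by (simp add: y_def bop_diff[OF bs] bop_diff[OF br] cm sq)
  hence "cinner y (s y) + cinner y (r y) = 0" by (metis cinner_add_right cinner_zero_right)
  hence "Re (cinner y (s y)) + Re (cinner y (r y)) = 0" by (metis plus_complex.sel(1) zero_complex.sel(1))
  hence "Re (cinner y (s y)) = 0" "Re (cinner y (r y)) = 0"
    using positive_opD(3)[OF ps, of y] positive_opD(3)[OF pr, of y] by linarith+
  hence sy: "s y = 0" and ry: "r y = 0" using pos_quad_zero[OF ps] pos_quad_zero[OF pr] by auto
  have "cinner y y = cinner y (s x) - cinner y (r x)" by (simp add: y_def cinner_diff_right)
  also have "\<dots> = cinner (s y) x - cinner (r y) x"
    using sym_opD[OF positive_sym[OF ps], of y x] sym_opD[OF positive_sym[OF pr], of y x] by simp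
  also have "\<dots> = 0" by (simp add: sy ry)
  finally have "y = 0" by (simp add: cinner_eq_zero_iff)
  thus "s x = r x" by (simp add: y_def)
qed

lemma op_sqrt_char:
  fixes T :: "'h::chilbert_space \<Rightarrow> 'h"
  assumes P: "positive_op T"
  shows "positive_op (op_sqrt T) \<and> (\<forall>x. op_sqrt T (op_sqrt T x) = T x) \<and>
     (\<forall>D. bounded_op D \<longrightarrow> (\<forall>x. D (T x) = T (D x)) \<longrightarrow> (\<forall>x. D (op_sqrt T x) = op_sqrt T (D x))) \<and>
     (\<forall>s. positive_op s \<longrightarrow> (\<forall>x. s (s x) = T x) \<longrightarrow> s = op_sqrt T)"
proof -
  obtain S where S: "positive_op S" "\<And>x. S (S x) = T x"
    and cS: "\<And>D. bounded_op D \<Longrightarrow> (\<forall>x. D (T x) = T (D x)) \<Longrightarrow> (\<forall>x. D (S x) = S (D x))"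
    using positive_sqrt_exists[OF P] by blast
  have uniq: "s = S" if ps: "positive_op s" and sq: "\<And>x. s (s x) = T x" for s
  proof (rule comm_pos_sq_unique[OF ps S(1)])
    have bs: "bounded_op s" using ps by (simp add: positive_op_def)
    have "\<forall>x. s (T x) = T (s x)" by (simp flip: sq)
    from cS[OF bs this] show "s (S x) = S (s x)" for x by simp
    show "s (s x) = S (S x)" for x by (simp add: sq S(2))
  qed
  have eq: "op_sqrt T = S"
    unfolding op_sqrt_def
  proof (rule the_equality)
    show "positive_op S \<and> S \<circ> S = T" using S by (auto simp: fun_eq_iff)
    show "s = S" if "positive_op s \<and> s \<circ> s = T" for s
      using that uniq by (auto simp: fun_eq_iff)
  qed
  show ?thesis using S cS uniq unfolding eq by blast
qed

lemma op_sqrt_pos: "positive_op T \<Longrightarrow> positive_op (op_sqrt T)"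
  using op_sqrt_char by blast

lemma op_sqrt_sq: "positive_op T \<Longrightarrow> op_sqrt T (op_sqrt T x) = T x"
  using op_sqrt_char by blast

lemma op_sqrt_comm: "positive_op T \<Longrightarrow> bounded_op D \<Longrightarrow> (\<And>x. D (T x) = T (D x)) \<Longrightarrow>
    D (op_sqrt T x) = op_sqrt T (D x)"
  using op_sqrt_char by blast

lemma op_sqrt_unique: "positive_op T \<Longrightarrow> positive_op s \<Longrightarrow> (\<And>x. s (s x) = T x) \<Longrightarrow> op_sqrt T = s"
  using op_sqrt_char by metis

lemma op_sqrt_bop: "positive_op T \<Longrightarrow> bounded_op (op_sqrt T)"
  using op_sqrt_pos positive_opD(1) by blast

lemma op_sqrt_sym: "positive_op T \<Longrightarrow> sym_op (op_sqrt T)"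
  using op_sqrt_pos positive_sym by blast


section \<open>Orthonormal bases\<close>

definition orthonormal :: "'h::chilbert_space set \<Rightarrow> bool" where
  "orthonormal B \<longleftrightarrow> (\<forall>e\<in>B. cinner e e = 1) \<and> (\<forall>e\<in>B. \<forall>f\<in>B. e \<noteq> f \<longrightarrow> cinner e f = 0)"

lemma onb_orthonormal: "is_onb B \<Longrightarrow> orthonormal B"
  by (simp add: is_onb_def orthonormal_def)

lemma orthonormal_inner: "orthonormal B \<Longrightarrow> e \<in> B \<Longrightarrow> f \<in> B \<Longrightarrow> cinner e f = (if e = f then 1 else 0)"
  by (auto simp: orthonormal_def)

lemma onb_exists: "\<exists>B::'h::chilbert_space set. is_onb B"
proof -
  define A where "A = {B::'h set. orthonormal B}"
  have "\<forall>C\<in>chains A. \<Union>C \<in> A"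
  proof
    fix C assume C: "C \<in> chains A"
    hence sub: "C \<subseteq> A" and ch: "\<And>X Y. X \<in> C \<Longrightarrow> Y \<in> C \<Longrightarrow> X \<subseteq> Y \<or> Y \<subseteq> X"
      by (auto simp: chains_def chain_subset_def)
    show "\<Union>C \<in> A" unfolding A_def orthonormal_def
    proof (intro CollectI conjI ballI impI)
      fix e assume "e \<in> \<Union>C"
      then obtain X where "X \<in> C" "e \<in> X" by auto
      thus "cinner e e = 1" using sub by (auto simp: A_def orthonormal_def)
    next
      fix e f assume e: "e \<in> \<Union>C" and f: "f \<in> \<Union>C" and ne: "e \<noteq> f"
      then obtain X Y where X: "X \<in> C" "e \<in> X" and Y: "Y \<in> C" "f \<in> Y" by auto
      from ch[OF X(1) Y(1)] have "e \<in> X \<union> Y \<and> f \<in> X \<union> Y \<and> (X \<union> Y = X \<or> X \<union> Y = Y)"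
        using X Y by auto
      hence "\<exists>Z\<in>C. e \<in> Z \<and> f \<in> Z" using X Y by auto
      then obtain Z where "Z \<in> C" "e \<in> Z" "f \<in> Z" by auto
      thus "cinner e f = 0" using sub ne by (auto simp: A_def orthonormal_def)
    qed
  qed
  from Zorn_Lemma[OF this] obtain M where M: "M \<in> A" and max: "\<And>X. X \<in> A \<Longrightarrow> M \<subseteq> X \<Longrightarrow> X = M"
    by blast
  have "is_onb M"
  proof -
    have on: "orthonormal M" using M by (simp add: A_def)
    have "x = 0" if orth: "\<forall>e\<in>M. cinner e x = 0" for x
    proof (rule ccontr)
      assume nz: "x \<noteq> 0"
      define u where "u = complex_of_real (1 / norm x) *\<^sub>C x"
      have nu: "norm u = 1" using nz by (simp add: u_def norm_scaleC norm_divide)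
      have uu: "cinner u u = 1" using nu by (simp add: cinner_self_real)
      have ue: "cinner e u = 0" if "e \<in> M" for e
        using orth that by (simp add: u_def cinner_scaleC_right)
      have "u \<notin> M" using ue uu by force
      have "orthonormal (insert u M)"
        using on uu ue unfolding orthonormal_def
        by (auto, metis cinner_cnj complex_cnj_zero)
      hence "insert u M = M" using max[of "insert u M"] by (auto simp: A_def)
      thus False using \<open>u \<notin> M\<close> by auto
    qed
    thus ?thesis using on by (simp add: is_onb_def orthonormal_def)
  qed
  thus ?thesis by blast
qed

lemma some_onb: "is_onb (some_onb :: 'h::chilbert_space set)"
  unfolding some_onb_def using onb_exists by (rule someI_ex)

lemma orthonormal_sum_inner:
  fixes B :: "'h::chilbert_space set"
  assumes on: "orthonormal B" and F: "finite F" "F \<subseteq> B"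
  shows "cinner (\<Sum>e\<in>F. c e *\<^sub>C e) (\<Sum>e\<in>F. d e *\<^sub>C e) = (\<Sum>e\<in>F. cnj (c e) * d e)"
proof -
  have "cinner (\<Sum>e\<in>F. c e *\<^sub>C e) (\<Sum>f\<in>F. d f *\<^sub>C f) = (\<Sum>e\<in>F. \<Sum>f\<in>F. cnj (c e) * (d f * cinner e f))"
  proof -
    have "cinner (\<Sum>e\<in>F. c e *\<^sub>C e) (\<Sum>f\<in>F. d f *\<^sub>C f) = (\<Sum>e\<in>F. cnj (c e) * cinner e (\<Sum>f\<in>F. d f *\<^sub>C f))"
      by (simp only: cinner_sum_left cinner_scaleC_left)
    also have "\<dots> = (\<Sum>e\<in>F. cnj (c e) * (\<Sum>f\<in>F. d f * cinner e f))"
      by (simp only: cinner_sum_right cinner_scaleC_right)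
    finally show ?thesis by (simp add: sum_distrib_left)
  qed
  also have "\<dots> = (\<Sum>e\<in>F. \<Sum>f\<in>F. if f = e then cnj (c e) * d f else 0)"
  proof -
    have io: "\<And>e f. e \<in> F \<Longrightarrow> f \<in> F \<Longrightarrow> cinner e f = (if e = f then 1 else 0)"
      using F orthonormal_inner[OF on] by blast
    show ?thesis by (intro sum.cong refl) (auto simp: io)
  qed
  also have "\<dots> = (\<Sum>e\<in>F. cnj (c e) * d e)"
    using F by (simp add: sum.delta)
  finally show ?thesis .
qed

lemma orthonormal_inner_sum:
  fixes B :: "'h::chilbert_space set"
  assumes on: "orthonormal B" and F: "finite F" "F \<subseteq> B" and e': "e' \<in> B"
  shows "cinner e' (\<Sum>e\<in>F. c e *\<^sub>C e) = (if e' \<in> F then c e' else 0)"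
proof -
  have "cinner e' (\<Sum>e\<in>F. c e *\<^sub>C e) = (\<Sum>e\<in>F. c e * cinner e' e)"
    by (simp add: cinner_sum_right cinner_scaleC_right)
  also have "\<dots> = (\<Sum>e\<in>F. if e = e' then c e else 0)"
  proof -
    have io: "\<And>e. e \<in> F \<Longrightarrow> cinner e' e = (if e' = e then 1 else 0)"
      using F e' orthonormal_inner[OF on] by blast
    show ?thesis by (intro sum.cong refl) (auto simp: io)
  qed
  also have "\<dots> = (if e' \<in> F then c e' else 0)" using F by (simp add: sum.delta')
  finally show ?thesis .
qed

lemma mult_cnj_norm: "z * cnj z = (complex_of_real (cmod z))\<^sup>2"
  by (metis complex_norm_square of_real_power)

lemma cnj_mult_norm: "cnj z * z = (complex_of_real (cmod z))\<^sup>2"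
  by (metis mult_cnj_norm mult.commute)

lemma bessel_finite:
  fixes B :: "'h::chilbert_space set"
  assumes on: "orthonormal B" and F: "finite F" "F \<subseteq> B"
  shows "(\<Sum>e\<in>F. (cmod (cinner e v))\<^sup>2) \<le> (norm v)\<^sup>2"
proof -
  define s where "s = (\<Sum>e\<in>F. cinner e v *\<^sub>C e)"
  define N where "N = (\<Sum>e\<in>F. (cmod (cinner e v))\<^sup>2)"
  have ss: "cinner s s = complex_of_real N"
    unfolding s_def N_def using orthonormal_sum_inner[OF on F, of "\<lambda>e. cinner e v" "\<lambda>e. cinner e v"]
    by (simp add: mult_cnj_norm cnj_mult_norm)
  have sv: "cinner s v = complex_of_real N"
    unfolding s_def N_def by (simp add: cinner_sum_left cinner_scaleC_left mult_cnj_norm cnj_mult_norm)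
  have vs: "cinner v s = complex_of_real N"
    using sv by (metis cinner_cnj complex_cnj_complex_of_real)
  have "0 \<le> Re (cinner (v - s) (v - s))" by (rule cinner_self_nonneg)
  also have "cinner (v - s) (v - s) = cinner v v - complex_of_real N"
    by (simp add: cinner_diff_left cinner_diff_right ss sv vs)
  finally show ?thesis by (simp add: N_def cinner_self_real)
qed

lemma bessel_summable:
  fixes B :: "'h::chilbert_space set"
  assumes on: "orthonormal B"
  shows "(\<lambda>e. (cmod (cinner e v))\<^sup>2) summable_on B"
proof (rule nonneg_bdd_above_summable_on)
  show "bdd_above (sum (\<lambda>e. (cmod (cinner e v))\<^sup>2) ` {F. F \<subseteq> B \<and> finite F})"
    using bessel_finite[OF on] by (auto intro!: bdd_aboveI[of _ "(norm v)\<^sup>2"])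
qed simp

lemma summable_on_sq_bound:
  fixes f :: "'a \<Rightarrow> 'b::banach" and g :: "'a \<Rightarrow> real"
  assumes gs: "g summable_on A" and gnn: "\<And>x. x \<in> A \<Longrightarrow> 0 \<le> g x"
    and bnd: "\<And>F. finite F \<Longrightarrow> F \<subseteq> A \<Longrightarrow> (norm (sum f F))\<^sup>2 \<le> sum g F"
  shows "f summable_on A"
proof -
  from gs obtain L where lim: "(sum g \<longlongrightarrow> L) (finite_subsets_at_top A)"
    unfolding has_sum_def summable_on_def by blast
  have "\<exists>P. eventually P (finite_subsets_at_top A) \<and>
              (\<forall>F F'. P F \<and> P F' \<longrightarrow> dist (sum f F) (sum f F') < e)" if "e>0" for e
  proof -
    define d P where "d = e\<^sup>2 / 32" and "P F \<longleftrightarrow> finite F \<and> F \<subseteq> A \<and> dist (sum g F) L < d" for F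
    have "d > 0" using that by (simp add: d_def)
    have ev_P: "eventually P (finite_subsets_at_top A)"
      using lim
      by (auto simp add: P_def[abs_def] \<open>0 < d\<close> eventually_conj_iff eventually_finite_subsets_at_top_weakI tendsto_iff)
    moreover have "dist (sum f F1) (sum f F2) < e" if "P F1" and "P F2" for F1 F2
    proof -
      from ev_P
      obtain F' where "finite F'" and "F' \<subseteq> A" and P_sup_F': "finite F \<and> F \<supseteq> F' \<and> F \<subseteq> A \<Longrightarrow> P F" for F
        by atomize_elim (simp add: eventually_finite_subsets_at_top)
      define F where "F = F' \<union> F1 \<union> F2"
      have "finite F" and "F \<subseteq> A"
        using F_def P_def[abs_def] that \<open>finite F'\<close> \<open>F' \<subseteq> A\<close> by auto
      have dist_F: "dist (sum g F) L < d"
        by (metis F_def \<open>F \<subseteq> A\<close> P_def P_sup_F' \<open>finite F\<close> le_supE order_refl)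
      have dist_F_subset: "dist (sum f F) (sum f F'') < e / 4" if F'': "F'' \<subseteq> F" "P F''" for F''
      proof -
        have fin'': "finite F''" using F'' \<open>finite F\<close> finite_subset by blast
        have "dist (sum f F) (sum f F'') = norm (sum f (F-F''))"
          unfolding dist_norm using \<open>finite F\<close> F'' by (subst sum_diff) auto
        moreover have "(norm (sum f (F-F'')))\<^sup>2 \<le> sum g (F - F'')"
          using \<open>finite F\<close> \<open>F \<subseteq> A\<close> by (intro bnd) auto
        moreover have "sum g (F - F'') = sum g F - sum g F''"
          using \<open>finite F\<close> F'' by (subst sum_diff) auto
        moreover have "sum g F - sum g F'' < 2 * d"
          using dist_F F'' unfolding P_def dist_norm real_norm_def by linarith
        ultimately have "(dist (sum f F) (sum f F''))\<^sup>2 < (e / 4)\<^sup>2"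
          by (simp add: d_def power_divide)
        moreover have "0 \<le> e / 4" using \<open>e > 0\<close> by simp
        ultimately show ?thesis by (rule power_less_imp_less_base)
      qed
      have "dist (sum f F1) (sum f F2) \<le> dist (sum f F) (sum f F1) + dist (sum f F) (sum f F2)"
        by (rule dist_triangle3)
      also have "\<dots> < e / 4 + e / 4"
        by (intro add_strict_mono dist_F_subset that) (auto simp: F_def)
      also have "\<dots> \<le> e" using \<open>e > 0\<close> by simp
      finally show "dist (sum f F1) (sum f F2) < e" .
    qed
    ultimately show ?thesis by blast
  qed
  then have "cauchy_filter (filtermap (sum f) (finite_subsets_at_top A))"
    by (simp add: cauchy_filter_metric_filtermap)
  moreover have "complete (UNIV::'b set)"
    by (meson Cauchy_convergent UNIV_I complete_def convergent_def)
  ultimately obtain L' where "(sum f \<longlongrightarrow> L') (finite_subsets_at_top A)"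
    using complete_uniform[where S=UNIV] by (force simp add: filterlim_def)
  then show ?thesis
    using summable_on_def has_sum_def by blast
qed

lemma onb_expansion:
  fixes B :: "'h::chilbert_space set"
  assumes onb: "is_onb B"
  shows "((\<lambda>e. cinner e v *\<^sub>C e) has_sum v) B"
proof -
  have on: "orthonormal B" by (rule onb_orthonormal[OF onb])
  have sm: "(\<lambda>e. cinner e v *\<^sub>C e) summable_on B"
  proof (rule summable_on_sq_bound[OF bessel_summable[OF on, of v]])
    show "(norm (\<Sum>e\<in>F. cinner e v *\<^sub>C e))\<^sup>2 \<le> (\<Sum>e\<in>F. (cmod (cinner e v))\<^sup>2)"
      if "finite F" "F \<subseteq> B" for F
    proof -
      have "complex_of_real ((norm (\<Sum>e\<in>F. cinner e v *\<^sub>C e))\<^sup>2) =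
          cinner (\<Sum>e\<in>F. cinner e v *\<^sub>C e) (\<Sum>e\<in>F. cinner e v *\<^sub>C e)"
        by (simp add: cinner_self_real)
      also have "\<dots> = complex_of_real (\<Sum>e\<in>F. (cmod (cinner e v))\<^sup>2)"
        using orthonormal_sum_inner[OF on that, of "\<lambda>e. cinner e v" "\<lambda>e. cinner e v"]
        by (simp add: mult_cnj_norm cnj_mult_norm)
      finally show ?thesis by (simp only: of_real_eq_iff)
    qed
  qed simp
  define w where "w = infsum (\<lambda>e. cinner e v *\<^sub>C e) B"
  have hw: "((\<lambda>e. cinner e v *\<^sub>C e) has_sum w) B" using sm by (simp add: w_def)
  have "cinner e' w = cinner e' v" if e': "e' \<in> B" for e'
  proof -
    have "((\<lambda>e. cinner e' (cinner e v *\<^sub>C e)) has_sum cinner e' w) B"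
      by (rule has_sum_bounded_linear[OF bounded_linear_cinner_right hw])
    moreover have "((\<lambda>e. cinner e' (cinner e v *\<^sub>C e)) has_sum cinner e' v) B"
    proof (rule has_sum_finite_neutralI[of "{e'}"])
      show "cinner e' (cinner e v *\<^sub>C e) = 0" if "e \<in> B - {e'}" for e
        using that e' by (auto simp: cinner_scaleC_right orthonormal_inner[OF on])
      show "cinner e' v = (\<Sum>e\<in>{e'}. cinner e' (cinner e v *\<^sub>C e))"
        using e' by (simp add: cinner_scaleC_right orthonormal_inner[OF on])
    qed (use e' in auto)
    ultimately show ?thesis by (rule has_sum_unique)
  qed
  hence "\<forall>e\<in>B. cinner e (v - w) = 0" by (simp add: cinner_diff_right)
  hence "v - w = 0" using onb unfolding is_onb_def by blast
  thus ?thesis using hw by simp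
qed

lemma parseval_inner:
  fixes B :: "'h::chilbert_space set"
  assumes onb: "is_onb B"
  shows "((\<lambda>e. cinner x e * cinner e y) has_sum cinner x y) B"
  using has_sum_bounded_linear[OF bounded_linear_cinner_right[of x] onb_expansion[OF onb, of y]]
  by (simp add: cinner_scaleC_right mult.commute)

lemma parseval_norm:
  fixes B :: "'h::chilbert_space set"
  assumes onb: "is_onb B"
  shows "((\<lambda>e. (cmod (cinner e v))\<^sup>2) has_sum (norm v)\<^sup>2) B"
proof -
  have "((\<lambda>e. Re (cinner v e * cinner e v)) has_sum Re (cinner v v)) B"
    by (rule has_sum_bounded_linear[OF bounded_linear_Re parseval_inner[OF onb]])
  moreover have "Re (cinner v e * cinner e v) = (cmod (cinner e v))\<^sup>2" for e
  proof -
    have "cinner v e * cinner e v = (complex_of_real (cmod (cinner e v)))\<^sup>2"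
      unfolding cinner_cnj[of v e] by (rule cnj_mult_norm)
    thus ?thesis by (metis Re_complex_of_real of_real_power)
  qed
  moreover have "Re (cinner v v) = (norm v)\<^sup>2" by (simp add: cinner_self_real)
  ultimately show ?thesis by simp
qed


lemma adjoint_sym: 
  fixes T :: "'h::chilbert_space \<Rightarrow> 'h"
  assumes S: "sym_op T"
  shows "adjoint_op T = T"
  unfolding adjoint_op_def
proof (rule the_equality)
  show "\<forall>x y. cinner (T x) y = cinner x (T y)" using S by (simp add: sym_op_def)
  show "S' = T" if h: "\<forall>x y. cinner (S' x) y = cinner x (T y)" for S'
  proof
    fix x
    have "cinner (S' x - T x) y = 0" for y
      using h S by (simp add: cinner_diff_left sym_op_def)
    from this[of "S' x - T x"] show "S' x = T x" by (simp add: cinner_eq_zero_iff)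
  qed
qed

lemma positive_comp_self:
  fixes T :: "'h::chilbert_space \<Rightarrow> 'h"
  assumes P: "positive_op T"
  shows "positive_op (T \<circ> T)"
proof -
  have b: "bounded_op T" using P by (simp add: positive_op_def)
  have "cinner x (T (T x)) = complex_of_real ((norm (T x))\<^sup>2)" for x
    using sym_opD[OF positive_sym[OF P], of x "T x"] by (simp add: cinner_self_real)
  thus ?thesis using bop_comp[OF b b] by (simp add: positive_op_def)
qed

lemma abs_op_pos:
  fixes T :: "'h::chilbert_space \<Rightarrow> 'h"
  assumes P: "positive_op T"
  shows "abs_op T = T"
proof -
  have "adjoint_op T = T" by (rule adjoint_sym[OF positive_sym[OF P]])
  hence "abs_op T = op_sqrt (T \<circ> T)" by (simp add: abs_op_def)
  also have "\<dots> = T" by (rule op_sqrt_unique[OF positive_comp_self[OF P] P]) simp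
  finally show ?thesis .
qed

lemma trace_class_pos_iff:
  fixes T :: "'h::chilbert_space \<Rightarrow> 'h"
  assumes P: "positive_op T"
  shows "trace_class T \<longleftrightarrow> (\<lambda>e. cinner e (T e)) summable_on some_onb"
  using P by (simp add: trace_class_def abs_op_pos positive_op_def)

definition rk :: "'h::chilbert_space \<Rightarrow> 'h \<Rightarrow> 'h" where
  "rk v x = cinner v x *\<^sub>C v"

lemma bop_rk: "bounded_op (rk v)"
proof -
  have "norm (rk v x) \<le> ((norm v)\<^sup>2) * norm x" for x
  proof -
    have "norm (rk v x) = cmod (cinner v x) * norm v" by (simp add: rk_def norm_scaleC)
    also have "\<dots> \<le> (norm v * norm x) * norm v" by (rule mult_right_mono[OF cinner_CS]) simp
    finally show ?thesis by (simp add: power2_eq_square algebra_simps)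
  qed
  thus ?thesis unfolding bounded_op_def
    by (auto simp: rk_def cinner_add_right cinner_scaleC_right scaleC_add_left scaleC_scaleC)
qed

lemma quad_rk: "cinner x (rk v x) = complex_of_real ((cmod (cinner v x))\<^sup>2)"
proof -
  have "cinner x (rk v x) = cinner v x * cinner x v" by (simp add: rk_def cinner_scaleC_right)
  also have "\<dots> = cinner v x * cnj (cinner v x)" by (metis cinner_cnj)
  also have "\<dots> = complex_of_real ((cmod (cinner v x))\<^sup>2)" by (simp add: mult_cnj_norm)
  finally show ?thesis .
qed

lemma positive_rk: "positive_op (rk v)"
  using bop_rk by (simp add: positive_op_def quad_rk)

lemma effect_rk:
  assumes v: "norm v = 1"
  shows "effect (rk v)"
proof -
  have b: "bounded_op (op_minus id (rk v))" by (rule bop_op_minus[OF bop_id bop_rk])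
  have "Im (cinner x (x - rk v x)) = 0 \<and> 0 \<le> Re (cinner x (x - rk v x))" for x
  proof -
    have "cmod (cinner v x) \<le> norm x" using cinner_CS[of v x] v by simp
    hence "(cmod (cinner v x))\<^sup>2 \<le> (norm x)\<^sup>2" by (simp add: power_mono)
    thus ?thesis by (simp add: cinner_diff_right quad_rk cinner_self_real)
  qed
  hence "positive_op (\<lambda>x. x - rk v x)" using b by (simp add: positive_op_def op_minus_def)
  thus ?thesis using positive_rk by (simp add: effect_iff)
qed

lemma trace_rk_comp:
  fixes X :: "'h::chilbert_space \<Rightarrow> 'h"
  assumes X: "bounded_op X"
  shows "((\<lambda>e. cinner e ((rk v \<circ> X) e)) has_sum cinner v (X v)) some_onb"
proof -
  have bl: "bounded_linear (\<lambda>y. cinner v (X y))"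
    using bounded_linear_compose[OF bounded_linear_cinner_right[of v] bop_bounded_linear[OF X]] by (simp add: o_def)
  have "((\<lambda>e. cinner v (X (cinner e v *\<^sub>C e))) has_sum cinner v (X v)) some_onb"
    by (rule has_sum_bounded_linear[OF bl onb_expansion[OF some_onb]])
  moreover have "cinner v (X (cinner e v *\<^sub>C e)) = cinner e ((rk v \<circ> X) e)" for e
    by (simp add: rk_def bop_scaleC[OF X] cinner_scaleC_right mult.commute)
  ultimately show ?thesis by simp
qed

lemma trace_rk_comp_eq:
  fixes X :: "'h::chilbert_space \<Rightarrow> 'h"
  assumes X: "bounded_op X"
  shows "trace (rk v \<circ> X) = cinner v (X v)"
  unfolding trace_def using trace_rk_comp[OF X] by (rule infsumI)

lemma state_rk:
  fixes v :: "'h::chilbert_space"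
  assumes v: "norm v = 1"
  shows "state (rk v)"
proof -
  have "trace (rk v \<circ> id) = cinner v (id v)" by (rule trace_rk_comp_eq[OF bop_id])
  hence "trace (rk v) = 1" using v by (simp add: cinner_self_real)
  thus ?thesis using effect_rk[OF v] by (simp add: state_def)
qed

lemma trace_class_rk: "trace_class (rk (v::'h::chilbert_space))"
proof -
  have "((\<lambda>e. cinner e ((rk v \<circ> id) e)) has_sum cinner v (id v)) some_onb"
    by (rule trace_rk_comp[OF bop_id])
  hence "(\<lambda>e. cinner e (rk v e)) summable_on some_onb" by (auto simp: summable_on_def)
  thus ?thesis by (simp add: trace_class_pos_iff[OF positive_rk])
qed


section \<open>Trace against positive trace-class operators\<close>

lemma trace_functional:
  fixes T X :: "'h::chilbert_space \<Rightarrow> 'h"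
  assumes P: "positive_op T" and tc: "trace_class T" and X: "bounded_op X" and SX: "sym_op X"
  shows "(\<lambda>e. cinner e (T (X e))) summable_on some_onb"
    and "positive_op X \<Longrightarrow> Im (trace (T \<circ> X)) = 0 \<and> 0 \<le> Re (trace (T \<circ> X))"
proof -
  define B0 where "B0 = (some_onb :: 'h set)"
  have onb: "is_onb B0" unfolding B0_def by (rule some_onb)
  define R where "R = op_sqrt T"
  have PR: "positive_op R" unfolding R_def by (rule op_sqrt_pos[OF P])
  have bR: "bounded_op R" using PR by (simp add: positive_op_def)
  have SR: "sym_op R" by (rule positive_sym[OF PR])
  have RR: "R (R x) = T x" for x unfolding R_def by (rule op_sqrt_sq[OF P])
  obtain K where K: "K \<ge> 0" "\<And>x. norm (X x) \<le> K * norm x" using bop_bound[OF X] by auto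
  (* (b) Hilbert-Schmidt property of R *)
  have Te: "cinner e (T e) = complex_of_real ((norm (R e))\<^sup>2)" for e
  proof -
    have "cinner e (T e) = cinner e (R (R e))" by (simp add: RR)
    also have "\<dots> = cinner (R e) (R e)" by (simp add: sym_opD[OF SR])
    finally show ?thesis by (simp add: cinner_self_real)
  qed
  have s1: "(\<lambda>e. cinner e (T e)) summable_on B0"
    using tc P by (simp add: trace_class_pos_iff B0_def)
  have hsR: "(\<lambda>e. (norm (R e))\<^sup>2) summable_on B0"
  proof -
    have "(\<lambda>e. Re (cinner e (T e))) summable_on B0"
      by (rule summable_on_bounded_linear[OF bounded_linear_Re s1])
    thus ?thesis by (simp add: Te)
  qed
  (* (c) Hilbert-Schmidt property of R X *)
  have hsRX: "(\<lambda>e. (norm (R (X e)))\<^sup>2) summable_on B0"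
  proof -
    define h where "h = (\<lambda>(f::'h, e::'h). (cmod (cinner e (X (R f))))\<^sup>2)"
    have g_sum: "(\<lambda>f. (norm (X (R f)))\<^sup>2) summable_on B0"
    proof (rule summable_on_comparison_test)
      show "(\<lambda>f. K\<^sup>2 * (norm (R f))\<^sup>2) summable_on B0" by (rule summable_on_cmult_right[OF hsR])
      show "(norm (X (R f)))\<^sup>2 \<le> K\<^sup>2 * (norm (R f))\<^sup>2" for f
        using K(2)[of "R f"] by (metis norm_ge_zero power_mono power_mult_distrib)
    qed simp
    have "h summable_on Sigma B0 (\<lambda>_. B0)"
    proof (rule summable_on_SigmaI[OF _ g_sum])
      show "((\<lambda>e. h (f, e)) has_sum (norm (X (R f)))\<^sup>2) B0" if "f \<in> B0" for f
        unfolding h_def by (simp add: parseval_norm[OF onb])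
      show "0 \<le> h (f, e)" for f e by (simp add: h_def)
    qed
    hence "h summable_on B0 \<times> B0" by simp
    hence sw: "(\<lambda>(e, f). h (f, e)) summable_on B0 \<times> B0" by (rule summable_on_swap[THEN iffD1])
    have inner: "((\<lambda>f. (\<lambda>(e, f). h (f, e)) (e, f)) has_sum (norm (R (X e)))\<^sup>2) B0" for e
    proof -
      have "cmod (cinner e (X (R f))) = cmod (cinner f (R (X e)))" for f
      proof -
        have "cinner e (X (R f)) = cinner (R (X e)) f"
          by (simp add: sym_opD[OF SX, symmetric] sym_opD[OF SR])
        also have "\<dots> = cnj (cinner f (R (X e)))" by (rule cinner_cnj)
        finally show ?thesis by simp
      qed
      thus ?thesis unfolding h_def by (simp add: parseval_norm[OF onb])
    qed
    have "(\<lambda>e. infsum (\<lambda>f. (\<lambda>(e, f). h (f, e)) (e, f)) B0) summable_on B0"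
      by (rule summable_on_SigmaD[where B = "\<lambda>_. B0", OF sw[simplified]])
        (use inner in \<open>auto simp: summable_on_def\<close>)
    moreover have "infsum (\<lambda>f. (\<lambda>(e, f). h (f, e)) (e, f)) B0 = (norm (R (X e)))\<^sup>2" for e
      using inner[of e] by (rule infsumI)
    ultimately show ?thesis by simp
  qed
  define F where "F = (\<lambda>(e::'h, f::'h). cinner (R e) f * cinner f (R (X e)))"
  have Fsum: "F summable_on B0 \<times> B0"
  proof -
    define x where "x = (\<lambda>(e::'h, f::'h). cinner (R e) f)"
    define y where "y = (\<lambda>(e::'h, f::'h). cinner f (R (X e)))"
    have xx: "(\<lambda>p. norm (x p * x p)) summable_on Sigma B0 (\<lambda>_. B0)"
    proof -
      have "(\<lambda>p. (cmod (x p))\<^sup>2) summable_on Sigma B0 (\<lambda>_. B0)"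
      proof (rule summable_on_SigmaI[OF _ hsR])
        show "((\<lambda>f. (cmod (x (e, f)))\<^sup>2) has_sum (norm (R e))\<^sup>2) B0" if "e \<in> B0" for e
        proof -
          have "cmod (cinner (R e) f) = cmod (cinner f (R e))" for f by (metis cinner_cnj complex_mod_cnj)
          thus ?thesis unfolding x_def by (simp add: parseval_norm[OF onb])
        qed
      qed simp
      thus ?thesis by (simp add: norm_mult power2_eq_square)
    qed
    have yy: "(\<lambda>p. norm (y p * y p)) summable_on Sigma B0 (\<lambda>_. B0)"
    proof -
      have "(\<lambda>p. (cmod (y p))\<^sup>2) summable_on Sigma B0 (\<lambda>_. B0)"
      proof (rule summable_on_SigmaI[OF _ hsRX])
        show "((\<lambda>f. (cmod (y (e, f)))\<^sup>2) has_sum (norm (R (X e)))\<^sup>2) B0" if "e \<in> B0" for e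
          unfolding y_def by (simp add: parseval_norm[OF onb])
      qed simp
      thus ?thesis by (simp add: norm_mult power2_eq_square)
    qed
    have "(\<lambda>p. norm (x p * y p)) summable_on Sigma B0 (\<lambda>_. B0)"
      by (rule abs_summable_product[OF xx yy])
    hence "(\<lambda>p. x p * y p) summable_on Sigma B0 (\<lambda>_. B0)" by (rule abs_summable_summable)
    moreover have "(\<lambda>p. x p * y p) = F" by (auto simp: x_def y_def F_def fun_eq_iff)
    ultimately show ?thesis by simp
  qed
  have Fin1: "((\<lambda>f. F (e, f)) has_sum cinner e (T (X e))) B0" for e
  proof -
    have "((\<lambda>f. F (e, f)) has_sum cinner (R e) (R (X e))) B0"
      unfolding F_def by (simp add: parseval_inner[OF onb])
    moreover have "cinner (R e) (R (X e)) = cinner e (T (X e))"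
      by (simp add: sym_opD[OF SR] RR)
    ultimately show ?thesis by simp
  qed
  have sumT: "(\<lambda>e. cinner e (T (X e))) summable_on B0"
  proof -
    have "(\<lambda>e. infsum (\<lambda>f. F (e, f)) B0) summable_on B0"
      by (rule summable_on_SigmaD[where B = "\<lambda>_. B0"]) (use Fsum Fin1 in \<open>auto simp: summable_on_def\<close>)
    moreover have "infsum (\<lambda>f. F (e, f)) B0 = cinner e (T (X e))" for e using Fin1[of e] by (rule infsumI)
    ultimately show ?thesis by simp
  qed
  thus "(\<lambda>e. cinner e (T (X e))) summable_on some_onb" by (simp add: B0_def)
  assume PX: "positive_op X"
  have Fin2: "((\<lambda>e. F (e, f)) has_sum cinner (X (R f)) (R f)) B0" for f
  proof -
    have "F (e, f) = cinner (X (R f)) e * cinner e (R f)" for e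
    proof -
      have "cinner (R e) f = cinner e (R f)" by (rule sym_opD[OF SR])
      moreover have "cinner f (R (X e)) = cinner (X (R f)) e"
        by (simp add: sym_opD[OF SR, symmetric] sym_opD[OF SX])
      ultimately show ?thesis by (simp add: F_def mult.commute)
    qed
    thus ?thesis by (simp add: parseval_inner[OF onb])
  qed
  have "trace (T \<circ> X) = infsum (\<lambda>e. infsum (\<lambda>f. F (e, f)) B0) B0"
  proof -
    have "infsum (\<lambda>f. F (e, f)) B0 = cinner e (T (X e))" for e using Fin1[of e] by (rule infsumI)
    thus ?thesis unfolding trace_def B0_def[symmetric] by simp
  qed
  also have "\<dots> = infsum (\<lambda>f. infsum (\<lambda>e. F (e, f)) B0) B0"
    using infsum_swap_banach[of "\<lambda>e f. F (e, f)" B0 B0] Fsum by simp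
  also have "\<dots> = infsum (\<lambda>f. cinner (X (R f)) (R f)) B0"
  proof -
    have "infsum (\<lambda>e. F (e, f)) B0 = cinner (X (R f)) (R f)" for f using Fin2[of f] by (rule infsumI)
    thus ?thesis by simp
  qed
  finally have tr: "trace (T \<circ> X) = infsum (\<lambda>f. cinner (X (R f)) (R f)) B0" .
  have sw: "(\<lambda>(f, e). F (e, f)) summable_on B0 \<times> B0"
    by (rule summable_on_swap[THEN iffD1, OF Fsum])
  have sum2: "(\<lambda>f. cinner (X (R f)) (R f)) summable_on B0"
  proof -
    have "(\<lambda>f. infsum (\<lambda>e. (\<lambda>(f, e). F (e, f)) (f, e)) B0) summable_on B0"
      by (rule summable_on_SigmaD[where B = "\<lambda>_. B0" and f = "\<lambda>(f, e). F (e, f)"]) (use sw Fin2 in \<open>auto simp: summable_on_def\<close>)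
    moreover have "infsum (\<lambda>e. F (e, f)) B0 = cinner (X (R f)) (R f)" for f using Fin2[of f] by (rule infsumI)
    ultimately show ?thesis by simp
  qed
  have nn: "0 \<le> cinner (X (R f)) (R f)" for f
  proof -
    have "cinner (X (R f)) (R f) = cinner (R f) (X (R f))" by (rule sym_opD[OF SX])
    thus ?thesis using positive_opD(2,3)[OF PX, of "R f"] by (simp add: less_eq_complex_def)
  qed
  have "0 \<le> trace (T \<circ> X)" unfolding tr by (rule infsum_nonneg_complex[OF sum2 nn])
  thus "Im (trace (T \<circ> X)) = 0 \<and> 0 \<le> Re (trace (T \<circ> X))" by (simp add: less_eq_complex_def)
qed


lemma infsum_finsum:
  fixes f :: "'i \<Rightarrow> 'a \<Rightarrow> complex"
  assumes "finite S" "\<And>i. i \<in> S \<Longrightarrow> f i summable_on A"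
  shows "(\<lambda>x. \<Sum>i\<in>S. f i x) summable_on A \<and> infsum (\<lambda>x. \<Sum>i\<in>S. f i x) A = (\<Sum>i\<in>S. infsum (f i) A)"
  using assms
proof (induction S rule: finite_induct)
  case empty thus ?case by simp
next
  case (insert j S)
  have sj: "f j summable_on A" using insert by simp
  have IH: "(\<lambda>x. \<Sum>i\<in>S. f i x) summable_on A \<and> infsum (\<lambda>x. \<Sum>i\<in>S. f i x) A = (\<Sum>i\<in>S. infsum (f i) A)"
    using insert by simp
  have "(\<lambda>x. f j x + (\<Sum>i\<in>S. f i x)) summable_on A" using summable_on_add[OF sj] IH by blast
  moreover have "infsum (\<lambda>x. f j x + (\<Sum>i\<in>S. f i x)) A = infsum (f j) A + infsum (\<lambda>x. \<Sum>i\<in>S. f i x) A"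
    using infsum_add[OF sj] IH by blast
  ultimately show ?case using insert IH by simp
qed

lemma quad_scaleR:
  fixes Z :: "'h::chilbert_space \<Rightarrow> 'h"
  assumes Z: "bounded_op Z"
  shows "cinner (r *\<^sub>R u) (Z (r *\<^sub>R u)) = complex_of_real (r\<^sup>2) * cinner u (Z u)"
  by (simp add: bop_scaleR[OF Z] cinner_scaleR_left cinner_scaleR_right power2_eq_square)

lemma quad_via_unit:
  fixes Z :: "'h::chilbert_space \<Rightarrow> 'h"
  assumes Z: "bounded_op Z" and vu: "v = n *\<^sub>R u"
  shows "cinner v (Z v) = complex_of_real (n\<^sup>2) * cinner u (Z u)"
proof -
  have "cinner v (Z v) = cinner (n *\<^sub>R u) (Z (n *\<^sub>R u))"
    using arg_cong[OF vu, of "\<lambda>t. cinner t (Z t)"] by simp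
  thus ?thesis using quad_scaleR[OF Z] by simp
qed

lemma quad_unit_ext:
  fixes Z W :: "'h::chilbert_space \<Rightarrow> 'h"
  assumes Z: "bounded_op Z" and W: "bounded_op W"
    and q: "\<And>v. norm v = 1 \<Longrightarrow> cinner v (Z v) = cinner v (W v)"
  shows "Z = W"
proof (rule quad_eq_imp_eq[OF Z W])
  fix v :: 'h
  show "cinner v (Z v) = cinner v (W v)"
  proof (cases "v = 0")
    case True thus ?thesis by (simp add: bop_zero[OF Z] bop_zero[OF W])
  next
    case False
    define u where "u = (1 / norm v) *\<^sub>R v"
    have u: "norm u = 1" using False by (simp add: u_def)
    have vu: "v = norm v *\<^sub>R u" using False by (simp add: u_def)
    show ?thesis using quad_via_unit[OF Z vu] quad_via_unit[OF W vu] q[OF u] by simp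
  qed
qed

lemma pos_unit:
  fixes Z :: "'h::chilbert_space \<Rightarrow> 'h"
  assumes Z: "bounded_op Z"
    and q: "\<And>v. norm v = 1 \<Longrightarrow> Im (cinner v (Z v)) = 0 \<and> 0 \<le> Re (cinner v (Z v))"
  shows "positive_op Z"
proof -
  have "Im (cinner v (Z v)) = 0 \<and> 0 \<le> Re (cinner v (Z v))" for v
  proof (cases "v = 0")
    case True thus ?thesis by simp
  next
    case False
    define u where "u = (1 / norm v) *\<^sub>R v"
    have u: "norm u = 1" using False by (simp add: u_def)
    have vu: "v = norm v *\<^sub>R u" using False by (simp add: u_def)
    have "cinner v (Z v) = complex_of_real ((norm v)\<^sup>2) * cinner u (Z u)"
      by (rule quad_via_unit[OF Z vu])
    thus ?thesis using q[OF u] by simp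
  qed
  thus ?thesis using Z by (simp add: positive_op_def)
qed

locale instr_ctx =
  fixes M :: "'d measure" and I Is :: "'d set \<Rightarrow> ('h::chilbert_space \<Rightarrow> 'h) \<Rightarrow> ('h \<Rightarrow> 'h)"
  assumes instr: "instrument M I" and dual: "dual_instrument M I Is"
begin

lemma tc_pos:
  assumes D: "D \<in> sets M"
  shows "trace_class (I D (rk v)) \<and> positive_op (I D (rk v))"
proof -
  have props: "\<forall>T. trace_class T \<longrightarrow> trace_class (I D T)" "completely_positive (I D)"
    using instr D by (auto simp: instrument_def)
  have tc: "trace_class (I D (rk v))" using props(1) trace_class_rk by blast
  have bp: "block_positive 1 (\<lambda>i j. rk v)"
    unfolding block_positive_def by (simp add: quad_rk)
  have h: "\<forall>n T. (\<forall>i<n. \<forall>j<n. trace_class (T i j)) \<longrightarrow> block_positive n T \<longrightarrow> block_positive n (\<lambda>i j. I D (T i j))"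
    using props(2) unfolding completely_positive_def .
  have h1: "(\<forall>i<(1::nat). \<forall>j<(1::nat). trace_class ((\<lambda>i j. rk v) i j)) \<longrightarrow> block_positive 1 (\<lambda>i j. rk v) \<longrightarrow>
      block_positive 1 (\<lambda>i j. I D ((\<lambda>i j. rk v) i j))"
    using spec[OF spec[OF h, of 1], of "\<lambda>i j. rk v"] .
  have "block_positive 1 (\<lambda>i j. I D (rk v))" using h1 bp trace_class_rk[of v] by simp
  hence "Im (cinner y (I D (rk v) y)) = 0 \<and> 0 \<le> Re (cinner y (I D (rk v) y))" for y
    unfolding block_positive_def by (drule_tac x = "\<lambda>_. y" in spec) simp
  moreover have "bounded_op (I D (rk v))" using tc by (simp add: trace_class_def)
  ultimately show ?thesis using tc by (simp add: positive_op_def)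
qed

lemma Is_bop: "D \<in> sets M \<Longrightarrow> bounded_op X \<Longrightarrow> bounded_op (Is D X)"
  using dual by (simp add: dual_instrument_def)

lemma Is_quad:
  assumes D: "D \<in> sets M" and X: "bounded_op X" and v: "norm v = 1"
  shows "cinner v (Is D X v) = trace (I D (rk v) \<circ> X)"
proof -
  have "trace (rk v \<circ> Is D X) = trace (I D (rk v) \<circ> X)"
    using dual D X state_rk[OF v] by (simp add: dual_instrument_def)
  thus ?thesis using trace_rk_comp_eq[OF Is_bop[OF D X]] by simp
qed

lemma Is_add:
  assumes D: "D \<in> sets M" and X: "bounded_op X" "sym_op X" and Y: "bounded_op Y" "sym_op Y"
  shows "Is D (op_add X Y) = op_add (Is D X) (Is D Y)"
proof (rule quad_unit_ext)
  have bXY: "bounded_op (op_add X Y)" by (rule bop_op_add[OF X(1) Y(1)])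
  show "bounded_op (Is D (op_add X Y))" by (rule Is_bop[OF D bXY])
  show "bounded_op (op_add (Is D X) (Is D Y))" by (rule bop_op_add[OF Is_bop[OF D X(1)] Is_bop[OF D Y(1)]])
  fix v :: 'h assume v: "norm v = 1"
  define T where "T = I D (rk v)"
  have T: "trace_class T" "positive_op T" using tc_pos[OF D] by (auto simp: T_def)
  have bT: "bounded_op T" using T by (simp add: positive_op_def)
  have sX: "(\<lambda>e. cinner e (T (X e))) summable_on some_onb" by (rule trace_functional(1)[OF T(2,1) X])
  have sY: "(\<lambda>e. cinner e (T (Y e))) summable_on some_onb" by (rule trace_functional(1)[OF T(2,1) Y])
  have "cinner v (Is D (op_add X Y) v) = trace (T \<circ> op_add X Y)" unfolding T_def by (rule Is_quad[OF D bXY v])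
  also have "\<dots> = infsum (\<lambda>e. cinner e (T (X e)) + cinner e (T (Y e))) some_onb"
    by (simp add: trace_def op_add_def bop_add[OF bT] cinner_add_right)
  also have "\<dots> = trace (T \<circ> X) + trace (T \<circ> Y)"
    by (simp add: trace_def infsum_add[OF sX sY])
  also have "\<dots> = cinner v (Is D X v) + cinner v (Is D Y v)"
    unfolding T_def by (simp add: Is_quad[OF D X(1) v] Is_quad[OF D Y(1) v])
  also have "\<dots> = cinner v (op_add (Is D X) (Is D Y) v)" by (simp add: op_add_def cinner_add_right)
  finally show "cinner v (Is D (op_add X Y) v) = cinner v (op_add (Is D X) (Is D Y) v)" .
qed

lemma sym_lincomb:
  assumes "\<And>i. i \<in> S \<Longrightarrow> sym_op (X i)"
  shows "sym_op (\<lambda>x. \<Sum>i\<in>S. complex_of_real (r i) *\<^sub>C X i x)"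
  using assms by (simp add: sym_op_def cinner_sum_left cinner_sum_right cinner_scaleC_left cinner_scaleC_right)

lemma Is_lincomb:
  assumes D: "D \<in> sets M" and S: "finite S" and X: "\<And>i. i \<in> S \<Longrightarrow> bounded_op (X i) \<and> sym_op (X i)"
  shows "Is D (\<lambda>x. \<Sum>i\<in>S. complex_of_real (r i) *\<^sub>C X i x) = (\<lambda>x. \<Sum>i\<in>S. complex_of_real (r i) *\<^sub>C Is D (X i) x)"
proof (rule quad_unit_ext)
  have bL: "bounded_op (\<lambda>x. \<Sum>i\<in>S. complex_of_real (r i) *\<^sub>C X i x)"
  proof -
    have "bounded_op (\<lambda>x. \<Sum>i\<in>S. op_scale (complex_of_real (r i)) (X i) x)"
      by (rule bop_sum_ops) (use X bop_op_scale in blast)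
    thus ?thesis by (simp add: op_scale_def)
  qed
  show "bounded_op (Is D (\<lambda>x. \<Sum>i\<in>S. complex_of_real (r i) *\<^sub>C X i x))" by (rule Is_bop[OF D bL])
  show "bounded_op (\<lambda>x. \<Sum>i\<in>S. complex_of_real (r i) *\<^sub>C Is D (X i) x)"
  proof -
    have "bounded_op (\<lambda>x. \<Sum>i\<in>S. op_scale (complex_of_real (r i)) (Is D (X i)) x)"
      by (rule bop_sum_ops) (use X Is_bop[OF D] bop_op_scale in blast)
    thus ?thesis by (simp add: op_scale_def)
  qed
  fix v :: 'h assume v: "norm v = 1"
  define T where "T = I D (rk v)"
  have T: "trace_class T" "positive_op T" using tc_pos[OF D] by (auto simp: T_def)
  have bT: "bounded_op T" using T by (simp add: positive_op_def)
  have sXi: "(\<lambda>e. complex_of_real (r i) * cinner e (T (X i e))) summable_on some_onb" if "i \<in> S" for i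
    using trace_functional(1)[OF T(2,1), of "X i"] X[OF that] by (intro summable_on_cmult_right) auto
  have "cinner v (Is D (\<lambda>x. \<Sum>i\<in>S. complex_of_real (r i) *\<^sub>C X i x) v)
      = trace (T \<circ> (\<lambda>x. \<Sum>i\<in>S. complex_of_real (r i) *\<^sub>C X i x))"
    unfolding T_def by (rule Is_quad[OF D bL v])
  also have "\<dots> = infsum (\<lambda>e. \<Sum>i\<in>S. complex_of_real (r i) * cinner e (T (X i e))) some_onb"
    by (simp add: trace_def bop_sum[OF bT] bop_scaleC[OF bT] cinner_sum_right cinner_scaleC_right)
  also have "\<dots> = (\<Sum>i\<in>S. infsum (\<lambda>e. complex_of_real (r i) * cinner e (T (X i e))) some_onb)"
    using infsum_finsum[OF S, of "\<lambda>i e. complex_of_real (r i) * cinner e (T (X i e))" some_onb] sXi by blast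
  also have "\<dots> = (\<Sum>i\<in>S. complex_of_real (r i) * trace (T \<circ> X i))"
    by (simp add: trace_def infsum_cmult_right')
  also have "\<dots> = (\<Sum>i\<in>S. complex_of_real (r i) * cinner v (Is D (X i) v))"
    unfolding T_def using Is_quad[OF D _ v] X by (intro sum.cong refl) auto
  also have "\<dots> = cinner v ((\<lambda>x. \<Sum>i\<in>S. complex_of_real (r i) *\<^sub>C Is D (X i) x) v)"
    by (simp add: cinner_sum_right cinner_scaleC_right)
  finally show "cinner v (Is D (\<lambda>x. \<Sum>i\<in>S. complex_of_real (r i) *\<^sub>C X i x) v) =
      cinner v ((\<lambda>x. \<Sum>i\<in>S. complex_of_real (r i) *\<^sub>C Is D (X i) x) v)" .
qed

lemma Is_pos:
  assumes D: "D \<in> sets M" and P: "positive_op X"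
  shows "positive_op (Is D X)"
proof (rule pos_unit)
  have X: "bounded_op X" "sym_op X" using P positive_sym by (auto simp: positive_op_def)
  show "bounded_op (Is D X)" by (rule Is_bop[OF D X(1)])
  fix v :: 'h assume v: "norm v = 1"
  have T: "trace_class (I D (rk v))" "positive_op (I D (rk v))" using tc_pos[OF D] by auto
  show "Im (cinner v (Is D X v)) = 0 \<and> 0 \<le> Re (cinner v (Is D X v))"
    unfolding Is_quad[OF D X(1) v] by (rule trace_functional(2)[OF T(2,1) X P])
qed

lemma Is_le:
  assumes D: "D \<in> sets M" and X: "bounded_op X" "sym_op X" and Y: "bounded_op Y" "sym_op Y"
    and le: "positive_op (op_minus Y X)"
  shows "op_le (Is D X) (Is D Y)"
proof -
  have sZ: "sym_op (op_minus Y X)" by (rule positive_sym[OF le])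
  have bZ: "bounded_op (op_minus Y X)" using le by (simp add: positive_op_def)
  have "Y = op_add (op_minus Y X) X" by (simp add: op_add_def op_minus_def fun_eq_iff)
  hence "Is D Y = op_add (Is D (op_minus Y X)) (Is D X)"
    using Is_add[OF D bZ sZ X] by simp
  hence "op_minus (Is D Y) (Is D X) = Is D (op_minus Y X)"
    by (simp add: op_add_def op_minus_def fun_eq_iff)
  thus ?thesis using Is_pos[OF D le] by (simp add: op_le_def)
qed

end


section \<open>Sequential products\<close>

lemma effect_pos: "effect a \<Longrightarrow> positive_op a" by (simp add: effect_iff)
lemma effect_bop: "effect a \<Longrightarrow> bounded_op a" by (simp add: effect_iff positive_op_def)
lemma effect_sym: "effect a \<Longrightarrow> sym_op a" by (simp add: effect_iff positive_sym)

lemma seqp_apply: "seqp a b x = op_sqrt a (b (op_sqrt a x))"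
  by (simp add: seqp_def)

lemma seqp_bop: "positive_op a \<Longrightarrow> bounded_op b \<Longrightarrow> bounded_op (seqp a b)"
  unfolding seqp_def by (intro bop_comp op_sqrt_bop) auto

lemma seqp_sym: "positive_op a \<Longrightarrow> sym_op b \<Longrightarrow> sym_op (seqp a b)"
  using op_sqrt_sym[of a] by (simp add: sym_op_def seqp_apply)

lemma seqp_pos:
  assumes a: "positive_op a" and b: "positive_op b"
  shows "positive_op (seqp a b)"
proof -
  have bb: "bounded_op (seqp a b)" by (rule seqp_bop[OF a]) (use b in \<open>simp add: positive_op_def\<close>)
  have "cinner x (seqp a b x) = cinner (op_sqrt a x) (b (op_sqrt a x))" for x
    by (simp add: seqp_apply sym_opD[OF op_sqrt_sym[OF a], symmetric])
  thus ?thesis using bb b by (simp add: positive_op_def)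
qed

lemma op_sqrt_id: "op_sqrt (id :: 'h::chilbert_space \<Rightarrow> 'h) = id"
proof (rule op_sqrt_unique)
  show "positive_op (id :: 'h \<Rightarrow> 'h)" by (simp add: positive_op_def bop_id cinner_self_real)
  thus "positive_op (id :: 'h \<Rightarrow> 'h)" .
qed simp

lemma seqp_add:
  assumes a: "positive_op a"
  shows "seqp a (op_add b c) = op_add (seqp a b) (seqp a c)"
  by (simp add: fun_eq_iff seqp_apply op_add_def bop_add[OF op_sqrt_bop[OF a]])

lemma seqp_lincomb:
  assumes a: "positive_op a"
  shows "seqp a (\<lambda>x. \<Sum>i\<in>S. complex_of_real (r i) *\<^sub>C B i x) = (\<lambda>x. \<Sum>i\<in>S. complex_of_real (r i) *\<^sub>C seqp a (B i) x)"
  by (simp add: fun_eq_iff seqp_apply bop_sum[OF op_sqrt_bop[OF a]] bop_scaleC[OF op_sqrt_bop[OF a]])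

lemma seqp_commute:
  assumes X: "positive_op X" and c: "positive_op c" and cm: "\<And>x. X (c x) = c (X x)"
  shows "seqp c X = seqp X c"
proof
  fix x
  have bX: "bounded_op X" and bc: "bounded_op c" using X c by (auto simp: positive_op_def)
  have "seqp c X x = X (op_sqrt c (op_sqrt c x))"
    by (simp add: seqp_apply op_sqrt_comm[OF c bX cm])
  also have "\<dots> = X (c x)" by (simp add: op_sqrt_sq[OF c])
  also have "\<dots> = c (op_sqrt X (op_sqrt X x))" by (simp add: op_sqrt_sq[OF X] cm)
  also have "\<dots> = seqp X c x"
    by (simp add: seqp_apply op_sqrt_comm[OF X bc cm[symmetric]])
  finally show "seqp c X x = seqp X c x" .
qed

lemma seqp_zero_swap:
  assumes a: "positive_op a" and b: "positive_op b" and z: "seqp a b = op_zero"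
  shows "seqp b a = op_zero"
proof -
  define sa where "sa = op_sqrt a"
  define sb where "sb = op_sqrt b"
  have Psa: "positive_op sa" and Psb: "positive_op sb" using op_sqrt_pos a b by (auto simp: sa_def sb_def)
  have Ssa: "sym_op sa" and Ssb: "sym_op sb" using Psa Psb positive_sym by auto
  have bsa: "bounded_op sa" and bsb: "bounded_op sb" using Psa Psb by (auto simp: positive_op_def)
  have z1: "sb (sa x) = 0" for x
  proof -
    have "cinner (sb (sa x)) (sb (sa x)) = cinner (sa x) (sb (sb (sa x)))" by (simp add: sym_opD[OF Ssb])
    also have "\<dots> = cinner (sa x) (b (sa x))" by (simp add: sb_def op_sqrt_sq[OF b])
    also have "\<dots> = cinner x (sa (b (sa x)))" by (simp add: sym_opD[OF Ssa])
    also have "\<dots> = 0" using z by (simp add: fun_eq_iff seqp_apply op_zero_def sa_def)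
    finally show ?thesis by (simp add: cinner_eq_zero_iff)
  qed
  have z2: "sa (sb x) = 0" for x
  proof -
    have "cinner y (sa (sb x)) = 0" for y
      by (simp add: sym_opD[OF Ssa, symmetric] sym_opD[OF Ssb, symmetric] z1)
    from this[of "sa (sb x)"] show ?thesis by (simp add: cinner_eq_zero_iff)
  qed
  show ?thesis
  proof
    fix x
    have "seqp b a x = sb (sa (sa (sb x)))" by (simp add: seqp_apply sb_def sa_def op_sqrt_sq[OF a])
    also have "\<dots> = 0" by (simp add: z2 bop_zero[OF bsa] bop_zero[OF bsb])
    finally show "seqp b a x = op_zero x" by (simp add: op_zero_def)
  qed
qed

lemma seqp_assoc:
  assumes a: "positive_op a" and b: "positive_op b" and ab: "a \<circ> b = b \<circ> a"
  shows "seqp a (seqp b c) = seqp (seqp a b) c"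
proof -
  define sa where "sa = op_sqrt a"
  define sb where "sb = op_sqrt b"
  have Psa: "positive_op sa" and Psb: "positive_op sb" using op_sqrt_pos a b by (auto simp: sa_def sb_def)
  have bsa: "bounded_op sa" and bsb: "bounded_op sb" using Psa Psb by (auto simp: positive_op_def)
  have ba: "bounded_op a" and bb: "bounded_op b" using a b by (auto simp: positive_op_def)
  have abx: "b (a x) = a (b x)" for x using ab by (metis comp_apply)
  have c1: "b (sa x) = sa (b x)" for x unfolding sa_def by (rule op_sqrt_comm[OF a bb abx])
  have c2: "sa (sb x) = sb (sa x)" for x unfolding sb_def by (rule op_sqrt_comm[OF b bsa c1[symmetric]])
  have pab: "positive_op (seqp a b)" by (rule seqp_pos[OF a b])
  have sq: "op_sqrt (seqp a b) = sa \<circ> sb"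
  proof (rule op_sqrt_unique[OF pab])
    define q where "q = op_sqrt sa"
    have Pq: "positive_op q" unfolding q_def by (rule op_sqrt_pos[OF Psa])
    have c3: "sb (q x) = q (sb x)" for x unfolding q_def by (rule op_sqrt_comm[OF Psa bsb c2[symmetric]])
    have "cinner x (sa (sb x)) = cinner (q x) (sb (q x))" for x
      using op_sqrt_sq[OF Psa, of "sb x"] sym_opD[OF positive_sym[OF Pq], of x "q (sb x)"]
      by (simp add: q_def[symmetric] c3)
    moreover have "bounded_op (sa \<circ> sb)" by (rule bop_comp[OF bsa bsb])
    ultimately show "positive_op (sa \<circ> sb)"
      using positive_opD(2,3)[OF Psb] by (simp add: positive_op_def)
    show "(sa \<circ> sb) ((sa \<circ> sb) x) = seqp a b x" for x
    proof -
      have "(sa \<circ> sb) ((sa \<circ> sb) x) = sa (sa (sb (sb x)))" by (simp add: c2)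
      also have "\<dots> = a (b x)" by (simp add: sa_def sb_def op_sqrt_sq[OF a] op_sqrt_sq[OF b])
      also have "\<dots> = seqp a b x" by (simp add: seqp_apply sa_def[symmetric] c1 op_sqrt_sq[OF a, folded sa_def])
      finally show ?thesis .
    qed
  qed
  show ?thesis
  proof
    fix x
    show "seqp a (seqp b c) x = seqp (seqp a b) c x"
      by (simp add: seqp_apply sq sa_def[symmetric] sb_def[symmetric] c2)
  qed
qed

lemma sub_eq_I: "(\<And>D. D \<in> sets M \<Longrightarrow> A D = B D) \<Longrightarrow> sub_eq M A B"
  by (simp add: sub_eq_def)

lemma sub_le_I: "(\<And>D. D \<in> sets M \<Longrightarrow> op_le (A D) (B D)) \<Longrightarrow> sub_le M A B"
  by (simp add: sub_le_def)

theorem theorem3p6: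
  fixes M :: "'d measure"
    and \<I> \<I>s :: "'d set \<Rightarrow> ('h::chilbert_space \<Rightarrow> 'h) \<Rightarrow> ('h \<Rightarrow> 'h)"
    and a b c :: "'h \<Rightarrow> 'h"
  assumes instr: "instrument M \<I>"
    and dual: "dual_instrument M \<I> \<I>s"
    and a: "effect a" and b: "effect b" and c: "effect c"
  shows
    "(eff_orth b c \<longrightarrow>
        sub_eq M (sub_obs \<I>s (seqp a (op_add b c)))
                 (sub_add (sub_obs \<I>s (seqp a b)) (sub_obs \<I>s (seqp a c))))
     \<and> (\<forall>n (lam :: nat \<Rightarrow> real) (bs :: nat \<Rightarrow> 'h \<Rightarrow> 'h).
          (\<forall>i\<in>{1..n}. 0 \<le> lam i \<and> lam i \<le> 1 \<and> effect (bs i)) \<and> (\<Sum>i=1..n. lam i) = 1 \<longrightarrow>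
          sub_eq M (sub_obs \<I>s (seqp a (\<lambda>x. \<Sum>i=1..n. complex_of_real (lam i) *\<^sub>C bs i x)))
                   (\<lambda>\<Delta> x. \<Sum>i=1..n. sub_scale (lam i) (sub_obs \<I>s (seqp a (bs i))) \<Delta> x))
     \<and> sub_eq M (sub_obs \<I>s (seqp id a)) (sub_obs \<I>s a)
     \<and> sub_eq M (sub_obs \<I>s (seqp a id)) (sub_obs \<I>s a)
     \<and> (seqp a b = op_zero \<longrightarrow> sub_eq M (sub_obs \<I>s (seqp a b)) (sub_obs \<I>s (seqp b a)))
     \<and> (a \<circ> b = b \<circ> a \<longrightarrow>
          sub_eq M (sub_obs \<I>s (seqp a (seqp b c))) (sub_obs \<I>s (seqp (seqp a b) c)))
     \<and> (a \<circ> c = c \<circ> a \<and> b \<circ> c = c \<circ> b \<longrightarrow>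
          sub_eq M (sub_obs \<I>s (seqp c (seqp a b))) (sub_obs \<I>s (seqp (seqp a b) c))
          \<and> (eff_orth a b \<longrightarrow>
               sub_eq M (sub_obs \<I>s (seqp c (op_add a b))) (sub_obs \<I>s (seqp (op_add a b) c))))
     \<and> sub_le M (sub_obs \<I>s (seqp a b)) (sub_obs \<I>s a)
     \<and> (op_le a b \<longrightarrow> sub_le M (sub_obs \<I>s (seqp c a)) (sub_obs \<I>s (seqp c b)))"
proof -
  interpret ic: instr_ctx M \<I> \<I>s by unfold_locales (fact instr, fact dual)
  have pa: "positive_op a" and pb: "positive_op b" and pc: "positive_op c"
    using a b c by (auto simp: effect_pos)
  have ba: "bounded_op a" and bb: "bounded_op b" and bc: "bounded_op c"
    using a b c by (auto simp: effect_bop)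
  have sa: "sym_op a" and sb: "sym_op b" and sc: "sym_op c"
    using a b c by (auto simp: effect_sym)
  have eff_bs: "\<And>X. effect X \<Longrightarrow> bounded_op X \<and> sym_op X" using effect_bop effect_sym by blast
  have item1: "sub_eq M (sub_obs \<I>s (seqp a (op_add b c)))
                 (sub_add (sub_obs \<I>s (seqp a b)) (sub_obs \<I>s (seqp a c)))"
  proof (rule sub_eq_I)
    fix D assume D: "D \<in> sets M"
    show "sub_obs \<I>s (seqp a (op_add b c)) D = sub_add (sub_obs \<I>s (seqp a b)) (sub_obs \<I>s (seqp a c)) D"
      unfolding sub_obs_def sub_add_def seqp_add[OF pa]
      by (rule ic.Is_add[OF D seqp_bop[OF pa bb] seqp_sym[OF pa sb] seqp_bop[OF pa bc] seqp_sym[OF pa sc]])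
  qed
  have item2: "\<forall>n (lam :: nat \<Rightarrow> real) (bs :: nat \<Rightarrow> 'h \<Rightarrow> 'h).
          (\<forall>i\<in>{1..n}. 0 \<le> lam i \<and> lam i \<le> 1 \<and> effect (bs i)) \<and> (\<Sum>i=1..n. lam i) = 1 \<longrightarrow>
          sub_eq M (sub_obs \<I>s (seqp a (\<lambda>x. \<Sum>i=1..n. complex_of_real (lam i) *\<^sub>C bs i x)))
                   (\<lambda>\<Delta> x. \<Sum>i=1..n. sub_scale (lam i) (sub_obs \<I>s (seqp a (bs i))) \<Delta> x)"
  proof (intro allI impI)
    fix n and lam :: "nat \<Rightarrow> real" and bs :: "nat \<Rightarrow> 'h \<Rightarrow> 'h"
    assume h: "(\<forall>i\<in>{1..n}. 0 \<le> lam i \<and> lam i \<le> 1 \<and> effect (bs i)) \<and> (\<Sum>i=1..n. lam i) = 1"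
    show "sub_eq M (sub_obs \<I>s (seqp a (\<lambda>x. \<Sum>i=1..n. complex_of_real (lam i) *\<^sub>C bs i x)))
                   (\<lambda>\<Delta> x. \<Sum>i=1..n. sub_scale (lam i) (sub_obs \<I>s (seqp a (bs i))) \<Delta> x)"
    proof (rule sub_eq_I)
      fix D assume D: "D \<in> sets M"
      have X: "bounded_op (seqp a (bs i)) \<and> sym_op (seqp a (bs i))" if "i \<in> {1..n}" for i
        using h that eff_bs seqp_bop[OF pa] seqp_sym[OF pa] by blast
      show "sub_obs \<I>s (seqp a (\<lambda>x. \<Sum>i=1..n. complex_of_real (lam i) *\<^sub>C bs i x)) D =
          (\<lambda>x. \<Sum>i=1..n. sub_scale (lam i) (sub_obs \<I>s (seqp a (bs i))) D x)"
        unfolding sub_obs_def sub_scale_def op_scale_def seqp_lincomb[OF pa]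
        by (rule ic.Is_lincomb[OF D _ X]) simp
    qed
  qed
  have item3: "sub_eq M (sub_obs \<I>s (seqp id a)) (sub_obs \<I>s a)"
    by (rule sub_eq_I) (simp add: sub_obs_def seqp_def op_sqrt_id)
  have item3b: "sub_eq M (sub_obs \<I>s (seqp a id)) (sub_obs \<I>s a)"
  proof -
    have "seqp a id = a" by (simp add: fun_eq_iff seqp_apply op_sqrt_sq[OF pa])
    thus ?thesis by (simp add: sub_eq_def)
  qed
  have item4: "seqp a b = op_zero \<longrightarrow> sub_eq M (sub_obs \<I>s (seqp a b)) (sub_obs \<I>s (seqp b a))"
    using seqp_zero_swap[OF pa pb] by (simp add: sub_eq_def)
  have item5: "a \<circ> b = b \<circ> a \<longrightarrow>
          sub_eq M (sub_obs \<I>s (seqp a (seqp b c))) (sub_obs \<I>s (seqp (seqp a b) c))"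
    using seqp_assoc[OF pa pb] by (simp add: sub_eq_def)
  have item6: "a \<circ> c = c \<circ> a \<and> b \<circ> c = c \<circ> b \<longrightarrow>
          sub_eq M (sub_obs \<I>s (seqp c (seqp a b))) (sub_obs \<I>s (seqp (seqp a b) c))
          \<and> (eff_orth a b \<longrightarrow>
               sub_eq M (sub_obs \<I>s (seqp c (op_add a b))) (sub_obs \<I>s (seqp (op_add a b) c)))"
  proof (rule impI, rule conjI)
    assume h: "a \<circ> c = c \<circ> a \<and> b \<circ> c = c \<circ> b"
    have cax: "c (a x) = a (c x)" for x using h by (metis comp_apply)
    have cbx: "c (b x) = b (c x)" for x using h by (metis comp_apply)
    have csa: "c (op_sqrt a x) = op_sqrt a (c x)" for x by (rule op_sqrt_comm[OF pa bc cax])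
    have "seqp c (seqp a b) = seqp (seqp a b) c"
      by (rule seqp_commute[OF seqp_pos[OF pa pb] pc]) (simp add: seqp_apply csa cbx)
    thus "sub_eq M (sub_obs \<I>s (seqp c (seqp a b))) (sub_obs \<I>s (seqp (seqp a b) c))"
      by (simp add: sub_eq_def)
    have pab: "positive_op (op_add a b)"
      using bop_op_add[OF ba bb] positive_opD(2,3)[OF pa] positive_opD(2,3)[OF pb]
      by (simp add: positive_op_def op_add_def cinner_add_right)
    have "seqp c (op_add a b) = seqp (op_add a b) c"
      by (rule seqp_commute[OF pab pc]) (simp add: op_add_def bop_add[OF bc] cax cbx)
    thus "eff_orth a b \<longrightarrow>
               sub_eq M (sub_obs \<I>s (seqp c (op_add a b))) (sub_obs \<I>s (seqp (op_add a b) c))"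
      by (simp add: sub_eq_def)
  qed
  have item7: "sub_le M (sub_obs \<I>s (seqp a b)) (sub_obs \<I>s a)"
  proof (rule sub_le_I)
    fix D assume D: "D \<in> sets M"
    have "positive_op (op_minus a (seqp a b))"
    proof -
      have bm: "bounded_op (op_minus a (seqp a b))" by (rule bop_op_minus[OF ba seqp_bop[OF pa bb]])
      have pIb: "positive_op (\<lambda>x. x - b x)" using b by (simp add: effect_iff)
      have "cinner x (op_minus a (seqp a b) x) = cinner (op_sqrt a x) (op_sqrt a x - b (op_sqrt a x))" for x
      proof -
        have "op_minus a (seqp a b) x = op_sqrt a (op_sqrt a x - b (op_sqrt a x))"
          by (simp add: op_minus_def seqp_apply op_sqrt_sq[OF pa] bop_diff[OF op_sqrt_bop[OF pa]])
        thus ?thesis by (simp add: sym_opD[OF op_sqrt_sym[OF pa], symmetric])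
      qed
      thus ?thesis using bm positive_opD(2,3)[OF pIb] by (simp add: positive_op_def)
    qed
    thus "op_le (sub_obs \<I>s (seqp a b) D) (sub_obs \<I>s a D)"
      unfolding sub_obs_def
      by (rule ic.Is_le[OF D seqp_bop[OF pa bb] seqp_sym[OF pa sb] ba sa])
  qed
  have item8: "op_le a b \<longrightarrow> sub_le M (sub_obs \<I>s (seqp c a)) (sub_obs \<I>s (seqp c b))"
  proof (intro impI sub_le_I)
    assume le: "op_le a b"
    fix D assume D: "D \<in> sets M"
    have pba: "positive_op (\<lambda>x. b x - a x)" using le by (simp add: op_le_iff)
    have "positive_op (op_minus (seqp c b) (seqp c a))"
    proof -
      have bm: "bounded_op (op_minus (seqp c b) (seqp c a))" by (rule bop_op_minus[OF seqp_bop[OF pc bb] seqp_bop[OF pc ba]])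
      have "cinner x (op_minus (seqp c b) (seqp c a) x) = cinner (op_sqrt c x) (b (op_sqrt c x) - a (op_sqrt c x))" for x
      proof -
        have "op_minus (seqp c b) (seqp c a) x = op_sqrt c (b (op_sqrt c x) - a (op_sqrt c x))"
          by (simp add: op_minus_def seqp_apply bop_diff[OF op_sqrt_bop[OF pc]])
        thus ?thesis by (simp add: sym_opD[OF op_sqrt_sym[OF pc], symmetric])
      qed
      thus ?thesis using bm positive_opD(2,3)[OF pba] by (simp add: positive_op_def)
    qed
    thus "op_le (sub_obs \<I>s (seqp c a) D) (sub_obs \<I>s (seqp c b) D)"
      unfolding sub_obs_def
      by (rule ic.Is_le[OF D seqp_bop[OF pc ba] seqp_sym[OF pc sa] seqp_bop[OF pc bb] seqp_sym[OF pc sb]])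
  qed
  show ?thesis using item1 item2 item3 item3b item4 item5 item6 item7 item8 by blast
qed


end
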